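(* Let $d\in\mathbb{N}$. For every symmetric quasi-Banach function space $E$ on $\mathbb{R}^d$, there exists $f\in E(\mathbb{R}^d)$ such that the inequality $$\Big\|(1-\Delta_{\mathbb{R}^d})^{-\frac{d}{4}}M_f(1-\Delta_{\mathbb{R}^d})^{-\frac{d}{4}}\Big\|_{1,\infty}\leq \|f\|_E$$ fails.
   Context: $\Delta_{\mathbb{R}^d}$ is the Laplace operator on $L_2(\mathbb{R}^d)$ and $M_f$ is multiplication by $f$. $S(\mathbb{R}^d)$ denotes the set of Lebesgue measurable functions $f$ on $\mathbb{R}^d$ such that, for some $n\in\mathbb{N}$, $|f|\chi_{\{|f|>n\}}$ is supported on a set of finite measure; $\mu(f)$ denotes the decreasing rearrangement of $|f|$. A symmetric quasi-Banach function space is a subspace $E(\mathbb{R}^d)\subset S(\mathbb{R}^d)$ with a complete quasi-norm $\|\cdot\|_E$ such that (1) if $f\in E$, $g\in S(\mathbb{R}^d)$ and $|g|\le|f|$, then $g\in E$ and $\|g\|_E\le\|f\|_E$; (2) if $f\in E$, $g\in S(\mathbb{R}^d)$ and $\mu(g)=\mu(f)$, then $g\in E$ and $\|g\|_E=\|f\|_E$. For a compact operator $T$, $\mu(k,T)=\inf\{\|T-R\|_\infty:\mathrm{rank}(R)\le k\}$ and $\|T\|_{1,\infty}=\sup_{k\ge0}(k+1)\mu(k,T)$ (equal to $+\infty$ if $T$ is not in $\mathcal{L}_{1,\infty}$). *)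

theory Defs
  imports "HOL-Analysis.Analysis"
begin

type_synonym 'n fn = "real^'n \<Rightarrow> complex"

section \<open>The Hilbert space L2(R^d), d = CARD('n)\<close>

definition l2 :: "'n::finite fn set" where
  "l2 = {g. g \<in> borel_measurable lebesgue \<and> integrable lebesgue (\<lambda>x. (cmod (g x))^2)}"

definition l2_inner :: "'n::finite fn \<Rightarrow> 'n fn \<Rightarrow> complex" where
  "l2_inner g h = (\<integral>x. g x * cnj (h x) \<partial>lebesgue)"

definition l2_norm :: "'n::finite fn \<Rightarrow> real" where
  "l2_norm g = sqrt (\<integral>x. (cmod (g x))^2 \<partial>lebesgue)"

definition heat_kernel :: "real \<Rightarrow> real^'n::finite \<Rightarrow> real" where
  "heat_kernel t x = (4 * pi * t) powr (- real CARD('n) / 2) * exp (- ((norm x) ^ 2) / (4 * t))"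

text \<open>Kernel of (1 - Laplacian)^(-a) = 1/Gamma(a) * int_0^infty t^(a-1) e^(-t) exp(t Laplacian) dt.\<close>
definition bessel_kernel :: "real \<Rightarrow> real^'n::finite \<Rightarrow> real" where
  "bessel_kernel a x = (1 / Gamma a) *
     (\<integral>t. (if 0 < t then exp (- t) * heat_kernel t x * t powr (a - 1) else 0) \<partial>lborel)"

text \<open>The operator (1 - Laplacian)^(-a), acting by convolution with the Bessel kernel.\<close>
definition bessel_pot :: "real \<Rightarrow> 'n::finite fn \<Rightarrow> 'n fn" where
  "bessel_pot a g = (\<lambda>x. \<integral>y. complex_of_real (bessel_kernel a (x - y)) * g y \<partial>lebesgue)"

text \<open>Sesquilinear form of T_f: <T_f g, h> = int f (A g) conj (A h), A = (1-Laplacian)^(-d/4).\<close>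
definition sandwich_form :: "'n::finite fn \<Rightarrow> 'n fn \<Rightarrow> 'n fn \<Rightarrow> complex" where
  "sandwich_form f g h =
     (\<integral>x. f x * bessel_pot (real CARD('n) / 4) g x * cnj (bessel_pot (real CARD('n) / 4) h x) \<partial>lebesgue)"

text \<open>Operator norm of T_f - R, where R g = sum_{i<k} <g, u i> v i is a generic operator of rank
  at most k.  If the form of T_f is not defined on L2 x L2, T_f is not a bounded operator and the
  distance is +infinity.\<close>
definition sandwich_dist :: "'n::finite fn \<Rightarrow> (nat \<Rightarrow> 'n fn) \<Rightarrow> (nat \<Rightarrow> 'n fn) \<Rightarrow> nat \<Rightarrow> ennreal" where
  "sandwich_dist f u v k =
    (if (\<forall>g\<in>l2. \<forall>h\<in>l2. integrable lebesgue
           (\<lambda>x. f x * bessel_pot (real CARD('n) / 4) g x * cnj (bessel_pot (real CARD('n) / 4) h x)))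
     then (SUP gh \<in> {(g, h). g \<in> l2 \<and> h \<in> l2 \<and> l2_norm g \<le> 1 \<and> l2_norm h \<le> 1}.
             ennreal (cmod (sandwich_form f (fst gh) (snd gh)
                - (\<Sum>i<k. l2_inner (fst gh) (u i) * l2_inner (v i) (snd gh)))))
     else \<infinity>)"

text \<open>Singular values mu(k, T_f) = inf { ||T_f - R|| : rank R \<le> k }.\<close>
definition sandwich_sing_val :: "'n::finite fn \<Rightarrow> nat \<Rightarrow> ennreal" where
  "sandwich_sing_val f k =
     (INF uv \<in> {(u, v). \<forall>i<k. u i \<in> l2 \<and> v i \<in> l2}. sandwich_dist f (fst uv) (snd uv) k)"

text \<open>||T_f||_{1,infty} = sup_k (k+1) mu(k, T_f)  (possibly +infinity).\<close>
definition sandwich_weak_norm :: "'n::finite fn \<Rightarrow> ennreal" where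
  "sandwich_weak_norm f = (SUP k. of_nat (k + 1) * sandwich_sing_val f k)"

definition S_space :: "'n::finite fn set" where
  "S_space = {f. f \<in> borel_measurable lebesgue \<and>
      (\<exists>n::nat. emeasure lebesgue {x. real n < cmod (f x)} < \<infinity>)}"

definition rearr :: "'n::finite fn \<Rightarrow> real \<Rightarrow> real" where
  "rearr f t = Inf {s. 0 \<le> s \<and> emeasure lebesgue {x. s < cmod (f x)} \<le> ennreal t}"

definition sym_qBfs :: "'n::finite fn set \<Rightarrow> ('n fn \<Rightarrow> real) \<Rightarrow> bool" where
  "sym_qBfs E N \<longleftrightarrow>
     E \<subseteq> S_space \<and>
     (\<lambda>x. 0) \<in> E \<and>
     (\<forall>f\<in>E. \<forall>g\<in>E. (\<lambda>x. f x + g x) \<in> E) \<and>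
     (\<forall>c. \<forall>f\<in>E. (\<lambda>x. c * f x) \<in> E) \<and>
     (\<forall>f\<in>E. 0 \<le> N f) \<and>
     (\<forall>f\<in>E. N f = 0 \<longleftrightarrow> (AE x in lebesgue. f x = 0)) \<and>
     (\<forall>c. \<forall>f\<in>E. N (\<lambda>x. c * f x) = cmod c * N f) \<and>
     (\<exists>C\<ge>1. \<forall>f\<in>E. \<forall>g\<in>E. N (\<lambda>x. f x + g x) \<le> C * (N f + N g)) \<and>
     (\<forall>X :: nat \<Rightarrow> 'n fn. (\<forall>n. X n \<in> E) \<and>
         (\<forall>e>0. \<exists>M. \<forall>m\<ge>M. \<forall>n\<ge>M. N (\<lambda>x. X m x - X n x) < e)
         \<longrightarrow> (\<exists>Z\<in>E. (\<lambda>n. N (\<lambda>x. X n x - Z x)) \<longlonglongrightarrow> 0)) \<and>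
     (\<forall>f\<in>E. \<forall>g\<in>S_space. (\<forall>x. cmod (g x) \<le> cmod (f x)) \<longrightarrow> g \<in> E \<and> N g \<le> N f) \<and>
     (\<forall>f\<in>E. \<forall>g\<in>S_space. (\<forall>t>0. rearr g t = rearr f t) \<longrightarrow> g \<in> E \<and> N g = N f)"

end

theory Submission
  imports Defs "HOL-Real_Asymp.Real_Asymp"
begin



lemma key_ineq:
  fixes u s p :: real
  assumes "u > 0" "s > 0" "p > 0"
  shows "u powr p * exp (- (s * u)) \<le> (p / (s * exp 1)) powr p"
proof -
  have "s * u / p \<le> exp (s * u / p - 1)"
    using exp_ge_add_one_self[of "s*u/p - 1"] by simp
  hence "(s * u / p) powr p \<le> exp (s * u / p - 1) powr p"
    using assms by (intro powr_mono2) auto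
  also have "\<dots> = exp (s * u - p)"
    using assms by (simp add: powr_def field_simps)
  finally have "(s/p) powr p * u powr p \<le> exp (s*u) * exp (-p)"
    using assms by (simp add: powr_mult[symmetric] exp_diff exp_minus field_simps)
  hence "u powr p * exp (- (s*u)) \<le> exp (-p) / (s/p) powr p"
    using assms by (simp add: field_simps exp_minus)
  also have "\<dots> = (p / (s * exp 1)) powr p"
  proof -
    have e: "exp 1 powr p = exp p" by (simp add: powr_def)
    have "(p / (s * exp 1)) powr p = p powr p / (s powr p * exp 1 powr p)"
      using assms by (simp add: powr_divide powr_mult)
    also have "\<dots> = exp (-p) / (s/p) powr p"
      using assms by (simp add: e powr_divide exp_minus field_simps)
    finally show ?thesis by simp
  qed
  finally show ?thesis .
qed

lemma G_meas: "(\<lambda>z::real^'n::finite. bessel_kernel b z) \<in> borel_measurable borel"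
  unfolding bessel_kernel_def heat_kernel_def
  by measurable




definition Ft :: "real^'n::finite \<Rightarrow> real \<Rightarrow> real" where
  "Ft z t = (if 0 < t then exp (- t) * heat_kernel t z * t powr (real CARD('n) / 4 - 1) else 0)"

lemma bessel_kernel_Ft: "bessel_kernel (real CARD('n) / 4) (z::real^'n::finite) = (1 / Gamma (real CARD('n) / 4)) * integral\<^sup>L lborel (Ft z)"
  unfolding bessel_kernel_def Ft_def by simp

lemma Ft_meas[measurable]: "Ft z \<in> borel_measurable borel"
  unfolding Ft_def heat_kernel_def by measurable

lemma Ft_nonneg: "0 \<le> Ft z t"
  unfolding Ft_def heat_kernel_def by auto

lemma Ft_eq:
  fixes z :: "real^'n::finite"
  assumes "t > 0"
  shows "Ft z t = exp (-t) * ((4*pi) powr (- real CARD('n) / 2) *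
      ((1/t) powr (real CARD('n) / 4 + 1) * exp (- ((norm z)^2/4 * (1/t)))))"
proof -
  have "(4 * pi * t) powr (- real CARD('n) / 2) = (4*pi) powr (- real CARD('n) / 2) * t powr (- real CARD('n) / 2)"
    using assms by (simp add: powr_mult)
  moreover have "t powr (- real CARD('n) / 2) * t powr (real CARD('n) / 4 - 1) = (1/t) powr (real CARD('n) / 4 + 1)"
  proof -
    have "t powr (- real CARD('n) / 2) * t powr (real CARD('n) / 4 - 1) = t powr (- (real CARD('n) / 4 + 1))"
      by (simp add: powr_add[symmetric])
    also have "\<dots> = (1/t) powr (real CARD('n) / 4 + 1)"
    proof -
      have "t powr (- (real CARD('n) / 4 + 1)) = inverse (t powr (real CARD('n) / 4 + 1))"
        by (rule powr_minus)
      also have "\<dots> = (1/t) powr (real CARD('n) / 4 + 1)"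
        using assms by (subst powr_divide) (auto simp: inverse_eq_divide)
      finally show ?thesis .
    qed
    finally show ?thesis .
  qed
  moreover have "- ((norm z)^2) / (4 * t) = - ((norm z)^2/4 * (1/t))" by simp
  ultimately show ?thesis
    using assms unfolding Ft_def heat_kernel_def by (simp add: field_simps)
qed

definition Cz :: "'n::finite itself \<Rightarrow> real \<Rightarrow> real" where
  "Cz _ r = (4*pi) powr (- real CARD('n) / 2) * ((real CARD('n) / 4 + 1) / (r^2/4 * exp 1)) powr (real CARD('n) / 4 + 1)"

lemma Ft_le:
  fixes z :: "real^'n::finite"
  assumes "z \<noteq> 0"
  shows "Ft z t \<le> Cz TYPE('n) (norm z) * (indicator {0..} t * exp (-t))"
proof (cases "t > 0")
  case True
  have "(1/t) powr (real CARD('n) / 4 + 1) * exp (- ((norm z)^2/4 * (1/t)))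
     \<le> ((real CARD('n) / 4 + 1) / ((norm z)^2/4 * exp 1)) powr (real CARD('n) / 4 + 1)"
    using True assms by (intro key_ineq) auto
  hence "(4*pi) powr (- real CARD('n) / 2) * ((1/t) powr (real CARD('n) / 4 + 1) * exp (- ((norm z)^2/4 * (1/t))))
     \<le> Cz TYPE('n) (norm z)"
    unfolding Cz_def by (intro mult_left_mono) auto
  hence "exp (-t) * ((4*pi) powr (- real CARD('n) / 2) * ((1/t) powr (real CARD('n) / 4 + 1) * exp (- ((norm z)^2/4 * (1/t)))))
     \<le> exp (-t) * Cz TYPE('n) (norm z)"
    by (intro mult_left_mono) auto
  thus ?thesis using True by (simp add: Ft_eq mult.commute)
next
  case False
  thus ?thesis by (simp add: Ft_def Cz_def indicator_def)
qed

lemma integrable_expm: "integrable lborel (\<lambda>t::real. indicator {0..} t * exp (-t))"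
proof -
  have "set_integrable lebesgue {0..} (\<lambda>t::real. exp (-1*t))"
    by (intro nonnegative_absolutely_integrable_1 integrable_on_exp_minus_to_infinity) auto
  hence "integrable lebesgue (\<lambda>t::real. indicator {0..} t * exp (-t))"
    unfolding set_integrable_def by simp
  thus ?thesis
    by (subst integrable_completion[symmetric]) auto
qed

lemma integrable_Ft:
  fixes z :: "real^'n::finite"
  assumes "z \<noteq> 0"
  shows "integrable lborel (Ft z)"
  apply (rule Bochner_Integration.integrable_bound[OF integrable_mult_right[OF integrable_expm, of "Cz TYPE('n) (norm z)"]])
  apply measurable
  apply (rule AE_I2)
proof -
  fix t
  have "norm (Ft z t) = Ft z t" using Ft_nonneg[of z t] by simp
  also have "\<dots> \<le> Cz TYPE('n) (norm z) * (indicator {0..} t * exp (-t))" by (rule Ft_le[OF assms])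
  also have "\<dots> = norm (Cz TYPE('n) (norm z) * (indicat_real {0..} t * exp (-t)))"
    by (simp add: Cz_def abs_mult)
  finally show "norm (Ft z t) \<le> norm (Cz TYPE('n) (norm z) * (indicat_real {0..} t * exp (-t)))" .
qed





lemma Gamma_a_pos: "Gamma (real CARD('n::finite) / 4) > 0"
  by (intro Gamma_real_pos) simp

lemma G_nonneg: "0 \<le> bessel_kernel (real CARD('n::finite) / 4) (z::real^'n)"
  unfolding bessel_kernel_Ft using Gamma_a_pos[where 'n='n]
  by (intro mult_nonneg_nonneg integral_nonneg_AE) (auto simp: Ft_nonneg)

definition I0 :: real where "I0 = integral\<^sup>L lborel (\<lambda>t::real. indicator {0..} t * exp (-t))"

lemma G_upper:
  fixes z :: "real^'n::finite"
  assumes "z \<noteq> 0"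
  shows "bessel_kernel (real CARD('n) / 4) z \<le> (1 / Gamma (real CARD('n) / 4)) * (Cz TYPE('n) (norm z) * I0)"
  unfolding bessel_kernel_Ft
proof (intro mult_left_mono)
  show "integral\<^sup>L lborel (Ft z) \<le> Cz TYPE('n) (norm z) * I0"
    unfolding I0_def
    apply (subst integral_mult_right_zero[symmetric])
    apply (rule integral_mono[OF integrable_Ft[OF assms]])
    using integrable_expm apply simp
    using Ft_le[OF assms] by simp
qed (use Gamma_a_pos[where 'n='n] in simp)

lemma Ft_lower:
  fixes z :: "real^'n::finite"
  assumes "0 < norm z" "norm z \<le> 1" "t \<in> {(norm z)^2..2*(norm z)^2}"
  shows "exp (-2) * (8 * pi * (norm z)^2) powr (- real CARD('n) / 2) * exp (-1/4) * ((1/2) * ((norm z)^2) powr (real CARD('n) / 4 - 1)) \<le> Ft z t"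
proof -
  define r where "r = norm z"
  have r: "0 < r" "r \<le> 1" using assms by (auto simp: r_def)
  have t: "r^2 \<le> t" "t \<le> 2*r^2" using assms by (auto simp: r_def)
  have tpos: "t > 0" using r t by (smt (verit) zero_less_power)
  have r2: "r^2 \<le> 1" using r by (simp add: power_le_one)
  have e1: "exp (-2) \<le> exp (-t)" using t r2 by simp
  have e2: "(8 * pi * r^2) powr (- real CARD('n) / 2) \<le> (4 * pi * t) powr (- real CARD('n) / 2)"
    using t tpos by (intro powr_mono2') (auto simp: divide_simps)
  have e3: "exp (-1/4) \<le> exp (- (r^2) / (4 * t))"
    using t tpos by (simp add: divide_simps)
  have e4: "(1/2) * (r^2) powr (real CARD('n) / 4 - 1) \<le> t powr (real CARD('n) / 4 - 1)"
  proof (cases "real CARD('n) / 4 - 1 \<ge> 0")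
    case True
    have "(r^2) powr (real CARD('n) / 4 - 1) \<le> t powr (real CARD('n) / 4 - 1)"
      using True t r by (intro powr_mono2) auto
    moreover have "0 \<le> (r^2) powr (real CARD('n) / 4 - 1)" by simp
    ultimately show ?thesis by linarith
  next
    case False
    have "(2*r^2) powr (real CARD('n) / 4 - 1) \<le> t powr (real CARD('n) / 4 - 1)"
      using False t tpos by (intro powr_mono2') auto
    moreover have "(2*r^2) powr (real CARD('n) / 4 - 1) = 2 powr (real CARD('n) / 4 - 1) * (r^2) powr (real CARD('n) / 4 - 1)"
      by (simp add: powr_mult)
    moreover have "1/2 \<le> 2 powr (real CARD('n) / 4 - 1)"
    proof -
      have "(2::real) powr (-1) \<le> 2 powr (real CARD('n) / 4 - 1)" by (intro powr_mono) auto
      thus ?thesis by (simp add: powr_minus)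
    qed
    ultimately show ?thesis
      by (smt (verit) mult_right_mono powr_ge_zero)
  qed
  have "exp (-2) * (8 * pi * r^2) powr (- real CARD('n) / 2) * exp (-1/4) * ((1/2) * (r^2) powr (real CARD('n) / 4 - 1))
     \<le> exp (-t) * (4 * pi * t) powr (- real CARD('n) / 2) * exp (- (r^2) / (4 * t)) * t powr (real CARD('n) / 4 - 1)"
    using e1 e2 e3 e4 by (intro mult_mono) auto
  thus ?thesis using tpos unfolding Ft_def heat_kernel_def r_def by (simp add: mult_ac)
qed




definition cL :: "'n::finite itself \<Rightarrow> real" where
  "cL _ = (1 / Gamma (real CARD('n) / 4)) * (exp (-2) * (8 * pi) powr (- real CARD('n) / 2) * exp (-1/4) * (1/2))"

lemma cL_pos: "cL TYPE('n::finite) > 0"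
  unfolding cL_def using Gamma_a_pos[where 'n='n] by simp

lemma G_lower:
  fixes z :: "real^'n::finite"
  assumes "0 < norm z" "norm z \<le> 1"
  shows "cL TYPE('n) * norm z powr (- real CARD('n) / 2) \<le> bessel_kernel (real CARD('n) / 4) z"
proof -
  define r where "r = norm z"
  have r: "0 < r" "r \<le> 1" using assms by (auto simp: r_def)
  define L where "L = exp (-2) * (8 * pi * r^2) powr (- real CARD('n) / 2) * exp (-1/4) * ((1/2) * (r^2) powr (real CARD('n) / 4 - 1))"
  have int1: "integrable lborel (\<lambda>t::real. indicator {r^2..2*r^2} t * L)"
    by (intro integrable_mult_left integrable_real_indicator) auto
  have eqI: "integral\<^sup>L lborel (\<lambda>t::real. indicator {r^2..2*r^2} t * L) = r^2 * L"
    using r by (simp add: measure_lborel_Icc)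
  have leI: "integral\<^sup>L lborel (\<lambda>t::real. indicator {r^2..2*r^2} t * L) \<le> integral\<^sup>L lborel (Ft z)"
  proof (rule integral_mono[OF int1 integrable_Ft])
    show "z \<noteq> 0" using assms by auto
    fix t :: real
    show "indicator {r^2..2*r^2} t * L \<le> Ft z t"
      using Ft_lower[OF assms, of t] Ft_nonneg[of z t] unfolding L_def r_def
      by (auto simp: indicator_def)
  qed
  have I: "r^2 * L \<le> integral\<^sup>L lborel (Ft z)" using eqI leI by simp
  have "r^2 * L = exp (-2) * (8 * pi) powr (- real CARD('n) / 2) * exp (-1/4) * (1/2)
       * (r^2 * (r^2) powr (- real CARD('n) / 2) * (r^2) powr (real CARD('n) / 4 - 1))"
    unfolding L_def using r by (simp add: powr_mult mult_ac)
  also have "r^2 * (r^2) powr (- real CARD('n) / 2) * (r^2) powr (real CARD('n) / 4 - 1) = (r^2) powr (- real CARD('n) / 4)"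
  proof -
    have "r^2 = (r^2) powr 1" using r by simp
    hence "r^2 * (r^2) powr (- real CARD('n) / 2) * (r^2) powr (real CARD('n) / 4 - 1)
        = (r^2) powr (1 + (- real CARD('n) / 2) + (real CARD('n) / 4 - 1))"
      by (metis powr_add)
    also have "1 + (- real CARD('n) / 2) + (real CARD('n) / 4 - 1) = - real CARD('n) / 4" by simp
    finally show ?thesis .
  qed
  also have "(r^2) powr (- real CARD('n) / 4) = r powr (- real CARD('n) / 2)"
  proof -
    have "r^2 = r powr 2" using r by (simp add: powr_realpow)
    hence "(r^2) powr (- real CARD('n) / 4) = r powr (2 * (- real CARD('n) / 4))"
      by (simp add: powr_powr)
    also have "2 * (- real CARD('n) / 4) = - real CARD('n) / 2" by simp
    finally show ?thesis .
  qed
  finally have "r^2 * L = exp (-2) * (8 * pi) powr (- real CARD('n) / 2) * exp (-1/4) * (1/2) * r powr (- real CARD('n) / 2)" .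
  with I have "exp (-2) * (8 * pi) powr (- real CARD('n) / 2) * exp (-1/4) * (1/2) * r powr (- real CARD('n) / 2) \<le> integral\<^sup>L lborel (Ft z)"
    by simp
  hence "(1 / Gamma (real CARD('n) / 4)) * (exp (-2) * (8 * pi) powr (- real CARD('n) / 2) * exp (-1/4) * (1/2) * r powr (- real CARD('n) / 2))
     \<le> (1 / Gamma (real CARD('n) / 4)) * integral\<^sup>L lborel (Ft z)"
    using Gamma_a_pos[where 'n='n] by (intro mult_left_mono) auto
  thus ?thesis unfolding bessel_kernel_Ft cL_def r_def by (simp add: mult_ac)
qed




lemma Cz_mono:
  assumes "0 < s" "s \<le> r"
  shows "Cz TYPE('n::finite) r \<le> Cz TYPE('n) s"
  unfolding Cz_def
proof (intro mult_left_mono powr_mono2)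
  show "(real CARD('n) / 4 + 1) / (r\<^sup>2 / 4 * exp 1) \<le> (real CARD('n) / 4 + 1) / (s\<^sup>2 / 4 * exp 1)"
    using assms by (intro divide_left_mono mult_right_mono power_mono) auto
qed (use assms in auto)

lemma G_bounded_away:
  assumes "\<sigma> > 0"
  shows "\<exists>B. \<forall>z::real^'n::finite. \<sigma> \<le> norm z \<longrightarrow> bessel_kernel (real CARD('n) / 4) z \<le> B"
proof (intro exI allI impI)
  fix z :: "real^'n" assume z: "\<sigma> \<le> norm z"
  hence "z \<noteq> 0" using assms by auto
  have I0: "I0 \<ge> 0" unfolding I0_def by (intro integral_nonneg_AE) auto
  have "bessel_kernel (real CARD('n) / 4) z \<le> (1 / Gamma (real CARD('n) / 4)) * (Cz TYPE('n) (norm z) * I0)"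
    by (rule G_upper) fact
  also have "\<dots> \<le> (1 / Gamma (real CARD('n) / 4)) * (Cz TYPE('n) \<sigma> * I0)"
    using Gamma_a_pos[where 'n='n] I0 Cz_mono[OF assms z, where 'n='n]
    by (intro mult_left_mono mult_right_mono) auto
  finally show "bessel_kernel (real CARD('n) / 4) z \<le> (1 / Gamma (real CARD('n) / 4)) * (Cz TYPE('n) \<sigma> * I0)" .
qed

lemma G_decay:
  assumes "\<delta> > 0"
  shows "\<exists>R>0. \<forall>z::real^'n::finite. R \<le> norm z \<longrightarrow> bessel_kernel (real CARD('n) / 4) z \<le> \<delta>"
proof -
  define q where "q = real CARD('n) / 4 + 1"
  have q: "q > 0" unfolding q_def by simp
  have "((\<lambda>r. (1 / Gamma (real CARD('n) / 4)) * (Cz TYPE('n) r * I0)) \<longlongrightarrow> 0) at_top"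
  proof -
    have "((\<lambda>r. (q / (r\<^sup>2 / 4 * exp 1)) powr q) \<longlongrightarrow> 0) at_top"
      using q by real_asymp
    hence "((\<lambda>r. (1 / Gamma (real CARD('n) / 4)) * (((4*pi) powr (- real CARD('n) / 2) * (q / (r\<^sup>2 / 4 * exp 1)) powr q) * I0)) \<longlongrightarrow>
            (1 / Gamma (real CARD('n) / 4)) * (((4*pi) powr (- real CARD('n) / 2) * 0) * I0)) at_top"
      by (intro tendsto_intros)
    thus ?thesis unfolding Cz_def q_def by simp
  qed
  hence "eventually (\<lambda>r. (1 / Gamma (real CARD('n) / 4)) * (Cz TYPE('n) r * I0) < \<delta>) at_top"
    using assms by (intro order_tendstoD) auto
  moreover have "eventually (\<lambda>r::real. r > 0) at_top" by simp
  ultimately have "eventually (\<lambda>r. r > 0 \<and> (1 / Gamma (real CARD('n) / 4)) * (Cz TYPE('n) r * I0) < \<delta>) at_top"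
    by eventually_elim auto
  then obtain N where N: "\<forall>r\<ge>N. r > 0 \<and> (1 / Gamma (real CARD('n) / 4)) * (Cz TYPE('n) r * I0) < \<delta>"
    unfolding eventually_at_top_linorder by blast
  define R where "R = N"
  have R: "R > 0" "(1 / Gamma (real CARD('n) / 4)) * (Cz TYPE('n) R * I0) < \<delta>"
    using N unfolding R_def by auto
  show ?thesis
  proof (intro exI[of _ R] conjI allI impI)
    fix z :: "real^'n" assume z: "R \<le> norm z"
    hence "z \<noteq> 0" using R by auto
    have I0: "I0 \<ge> 0" unfolding I0_def by (intro integral_nonneg_AE) auto
    have "bessel_kernel (real CARD('n) / 4) z \<le> (1 / Gamma (real CARD('n) / 4)) * (Cz TYPE('n) (norm z) * I0)"
      by (rule G_upper) fact
    also have "\<dots> \<le> (1 / Gamma (real CARD('n) / 4)) * (Cz TYPE('n) R * I0)"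
      using Gamma_a_pos[where 'n='n] I0 Cz_mono[OF R(1) z, where 'n='n]
      by (intro mult_left_mono mult_right_mono) auto
    finally show "bessel_kernel (real CARD('n) / 4) z \<le> \<delta>" using R by simp
  qed (use R in auto)
qed




definition om :: "'n::finite itself \<Rightarrow> real" where "om _ = unit_ball_vol (real CARD('n))"

lemma om_pos: "om TYPE('n::finite) > 0" unfolding om_def by simp

lemma emeasure_leb_cball:
  assumes "r \<ge> 0"
  shows "emeasure lebesgue (cball (c::real^'n::finite) r) = ennreal (om TYPE('n) * r ^ CARD('n))"
proof -
  have "emeasure lebesgue (cball c r) = emeasure lborel (cball c r)"
    by (simp add: emeasure_completion)
  also have "\<dots> = ennreal (om TYPE('n) * r ^ CARD('n))"
    using emeasure_cball[OF assms, of c] by (simp add: om_def)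
  finally show ?thesis .
qed

lemma measure_leb_cball:
  assumes "r \<ge> 0"
  shows "measure lebesgue (cball (c::real^'n::finite) r) = om TYPE('n) * r ^ CARD('n)"
  using emeasure_leb_cball[OF assms, of c] om_pos[where 'n='n] assms
  by (simp add: measure_def)

definition rho :: "nat \<Rightarrow> real" where "rho j = (1/2)^j"

definition Dsh :: "real^'n::finite \<Rightarrow> nat \<Rightarrow> (real^'n) set" where
  "Dsh p j = cball p (rho j) - cball p (rho j / 2)"

definition mj :: "'n::finite itself \<Rightarrow> nat \<Rightarrow> real" where
  "mj _ j = om TYPE('n) * (1 - (1/2)^CARD('n)) * (rho j)^CARD('n)"

lemma mj_pos: "mj TYPE('n::finite) j > 0"
  unfolding mj_def rho_def using om_pos[where 'n='n]
  by (intro mult_pos_pos) (auto simp: power_less_one_iff)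

lemma Dsh_sets[measurable]: "Dsh p j \<in> sets borel" "Dsh p j \<in> sets lebesgue"
  unfolding Dsh_def by auto

lemma emeasure_Dsh: "emeasure lebesgue (Dsh (p::real^'n::finite) j) = ennreal (mj TYPE('n) j)"
proof -
  have sub: "cball p (rho j / 2) \<subseteq> cball p (rho j)" by (intro subset_cball) (simp add: rho_def)
  have "emeasure lebesgue (Dsh p j) = emeasure lebesgue (cball p (rho j)) - emeasure lebesgue (cball p (rho j / 2))"
    unfolding Dsh_def by (intro emeasure_Diff) (use sub emeasure_leb_cball[of "rho j/2" p] in \<open>auto simp: rho_def\<close>)
  also have "\<dots> = ennreal (om TYPE('n) * (rho j) ^ CARD('n)) - ennreal (om TYPE('n) * (rho j/2) ^ CARD('n))"
  proof -
    have c1: "emeasure lebesgue (cball p (rho j)) = ennreal (om TYPE('n) * (rho j) ^ CARD('n))"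
      by (rule emeasure_leb_cball) (simp add: rho_def)
    have c2: "emeasure lebesgue (cball p (rho j/2)) = ennreal (om TYPE('n) * (rho j/2) ^ CARD('n))"
      by (rule emeasure_leb_cball) (simp add: rho_def)
    show ?thesis by (simp only: c1 c2)
  qed
  also have "\<dots> = ennreal (om TYPE('n) * (rho j) ^ CARD('n) - om TYPE('n) * (rho j/2) ^ CARD('n))"
    using om_pos[where 'n='n]
    by (intro ennreal_minus) (auto simp: rho_def intro!: mult_left_mono power_mono)
  also have "om TYPE('n) * (rho j) ^ CARD('n) - om TYPE('n) * (rho j/2) ^ CARD('n) = mj TYPE('n) j"
    unfolding mj_def by (simp add: power_divide field_simps)
  finally show ?thesis .
qed

lemma measure_Dsh: "measure lebesgue (Dsh (p::real^'n::finite) j) = mj TYPE('n) j"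
  using emeasure_Dsh[of p j] mj_pos[where 'n='n] by (simp add: measure_def)

lemma Dsh_disj: "i \<noteq> j \<Longrightarrow> Dsh p i \<inter> Dsh p j = {}"
proof -
  assume "i \<noteq> j"
  { fix i j :: nat assume "i < j"
    hence "rho j \<le> rho (Suc i)" unfolding rho_def by (intro power_decreasing) auto
    hence "rho j \<le> rho i / 2" by (simp add: rho_def)
    hence "Dsh p i \<inter> Dsh p j = {}" unfolding Dsh_def by auto }
  thus ?thesis using \<open>i \<noteq> j\<close> by (metis Int_commute linorder_neqE_nat)
qed

definition phi :: "nat \<Rightarrow> real^'n::finite \<Rightarrow> real^'n \<Rightarrow> real" where
  "phi J p y = (\<Sum>j\<in>{1..J}. indicator (Dsh p j) y / sqrt (mj TYPE('n) j))"

lemma phi_meas[measurable]: "phi J p \<in> borel_measurable borel"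
  unfolding phi_def by measurable

lemma phi_meas_leb[measurable]: "phi J p \<in> borel_measurable lebesgue"
  by (rule measurable_completion) simp

lemma phi_nonneg: "0 \<le> phi J (p::real^'n::finite) y"
  unfolding phi_def using mj_pos[where 'n='n] by (intro sum_nonneg divide_nonneg_nonneg) (auto simp: less_imp_le)

lemma phi_supp:
  assumes "phi J p y \<noteq> 0"
  shows "rho J / 2 < dist p y \<and> dist p y \<le> 1/2"
proof -
  obtain j where j: "j \<in> {1..J}" "y \<in> Dsh p j"
    using assms unfolding phi_def by (metis (no_types, lifting) div_0 indicator_simps(2) sum.neutral)
  have "rho J \<le> rho j" unfolding rho_def using j by (intro power_decreasing) auto
  moreover have "rho j \<le> 1/2" unfolding rho_def using j
    using power_decreasing[of 1 j "1/2::real"] by simp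
  ultimately show ?thesis using j unfolding Dsh_def by auto
qed

lemma integrable_ind_D: "integrable lebesgue (indicator (Dsh (p::real^'n::finite) j) :: _ \<Rightarrow> real)"
  by (intro integrable_real_indicator) (auto simp: emeasure_Dsh)

lemma integrable_phi: "integrable lebesgue (phi J (p::real^'n::finite))"
  unfolding phi_def by (rule Bochner_Integration.integrable_sum, rule integrable_divide_zero, rule integrable_ind_D)

lemma phi_sq: "(phi J (p::real^'n::finite) y)^2 = (\<Sum>j\<in>{1..J}. indicator (Dsh p j) y / mj TYPE('n) j)"
proof (cases "\<exists>j\<in>{1..J}. y \<in> Dsh p j")
  case True
  then obtain j where j: "j \<in> {1..J}" "y \<in> Dsh p j" by blast
  have other: "i \<in> {1..J} \<Longrightarrow> i \<noteq> j \<Longrightarrow> y \<notin> Dsh p i" for i using Dsh_disj[of i j p] j by auto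
  have "phi J p y = 1 / sqrt (mj TYPE('n) j)"
    unfolding phi_def by (subst sum.remove[OF _ j(1)]) (auto simp: j other intro!: sum.neutral)
  moreover have "(\<Sum>j\<in>{1..J}. indicator (Dsh p j) y / mj TYPE('n) j) = 1 / mj TYPE('n) j"
    by (subst sum.remove[OF _ j(1)]) (auto simp: j other intro!: sum.neutral)
  ultimately show ?thesis using mj_pos[where 'n='n, of j] by (simp add: power_divide less_imp_le)
next
  case False
  thus ?thesis unfolding phi_def by (auto intro!: sum.neutral)
qed

lemma phi_sq_integral: "integral\<^sup>L lebesgue (\<lambda>y. (phi J (p::real^'n::finite) y)^2) = real J"
proof -
  have "integral\<^sup>L lebesgue (\<lambda>y. (phi J p y)^2) = (\<Sum>j\<in>{1..J}. integral\<^sup>L lebesgue (\<lambda>y. indicator (Dsh p j) y / mj TYPE('n) j))"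
    unfolding phi_sq by (rule Bochner_Integration.integral_sum, rule integrable_divide_zero, rule integrable_ind_D)
  also have "\<dots> = (\<Sum>j\<in>{1..J}. 1)"
  proof (intro sum.cong refl)
    fix j assume "j \<in> {1..J}"
    have "mj TYPE('n) j \<noteq> 0" using mj_pos[where 'n='n, of j] by simp
    thus "integral\<^sup>L lebesgue (\<lambda>y. indicator (Dsh p j) y / mj TYPE('n) j) = 1"
      by (simp add: measure_Dsh)
  qed
  finally show ?thesis by simp
qed

lemma integrable_phi_sq: "integrable lebesgue (\<lambda>y. (phi J (p::real^'n::finite) y)^2)"
  unfolding phi_sq by (rule Bochner_Integration.integrable_sum, rule integrable_divide_zero, rule integrable_ind_D)




abbreviation GG :: "real^'n::finite \<Rightarrow> real" where
  "GG \<equiv> bessel_kernel (real CARD('n) / 4)"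

definition Pf :: "(real^'n::finite \<Rightarrow> real) \<Rightarrow> real^'n \<Rightarrow> real" where
  "Pf f x = (\<integral>y. GG (x - y) * f y \<partial>lebesgue)"

lemma GG_meas[measurable]: "GG \<in> borel_measurable borel"
  by (rule G_meas)

lemma GG_shift_meas: "(\<lambda>y. GG (x - y) * f y) \<in> borel_measurable lebesgue"
  if "f \<in> borel_measurable lebesgue" for f :: "real^'n::finite \<Rightarrow> real"
proof -
  have "(\<lambda>y. GG (x - y)) \<in> borel_measurable lebesgue"
    by (rule measurable_completion) measurable
  thus ?thesis using that by measurable
qed

lemma P_bound:
  fixes f :: "real^'n::finite \<Rightarrow> real"
  assumes B: "\<And>z::real^'n. \<sigma> \<le> norm z \<Longrightarrow> GG z \<le> B"
    and f: "integrable lebesgue f" "\<And>y. 0 \<le> f y"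
    and supp: "\<And>y. f y \<noteq> 0 \<Longrightarrow> \<sigma> \<le> norm (x - y)"
  shows "integrable lebesgue (\<lambda>y. GG (x - y) * f y)" "0 \<le> Pf f x" "Pf f x \<le> B * integral\<^sup>L lebesgue f"
proof -
  have pw: "norm (GG (x - y) * f y) \<le> B * f y" for y
  proof (cases "f y = 0")
    case False
    hence "GG (x - y) \<le> B" using B[of "x-y"] supp[OF False] by auto
    thus ?thesis using G_nonneg[of "x-y"] f(2)[of y] by (simp add: abs_mult mult_right_mono)
  qed simp
  show I: "integrable lebesgue (\<lambda>y. GG (x - y) * f y)"
    apply (rule Bochner_Integration.integrable_bound[OF integrable_mult_right[OF f(1), of B]])
    apply (rule GG_shift_meas) using f(1) apply (simp add: borel_measurable_integrable)
    apply (rule AE_I2)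
    using pw by (smt (verit, best) norm_ge_zero real_norm_def)
  show "0 \<le> Pf f x" unfolding Pf_def
    using G_nonneg[where 'n='n] f(2) by (intro integral_nonneg_AE AE_I2 mult_nonneg_nonneg) auto
  show "Pf f x \<le> B * integral\<^sup>L lebesgue f" unfolding Pf_def
    apply (subst integral_mult_right_zero[symmetric])
    apply (rule integral_mono[OF I integrable_mult_right[OF f(1)]])
    using pw by (smt (verit, best) real_norm_def)
qed

definition c1 :: "'n::finite itself \<Rightarrow> real" where
  "c1 _ = cL TYPE('n) * sqrt (om TYPE('n) * (1 - (1/2)^CARD('n))) * 2 powr (- real CARD('n) / 2)"

lemma c1_pos: "c1 TYPE('n::finite) > 0"
  unfolding c1_def using cL_pos[where 'n='n] om_pos[where 'n='n]
  by (intro mult_pos_pos) (auto simp: power_less_one_iff)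

lemma rho_pos: "rho j > 0" unfolding rho_def by simp

lemma rho_le: "j \<le> J \<Longrightarrow> rho J \<le> rho j" unfolding rho_def by (intro power_decreasing) auto

lemma rho_half: "1 \<le> j \<Longrightarrow> rho j \<le> 1/2"
  unfolding rho_def using power_decreasing[of 1 j "1/2::real"] by simp

lemma sqrt_mj: "sqrt (mj TYPE('n::finite) j) * (2 * rho j) powr (- real CARD('n) / 2)
   = sqrt (om TYPE('n) * (1 - (1/2)^CARD('n))) * 2 powr (- real CARD('n) / 2)"
proof -
  have r: "rho j > 0" by (rule rho_pos)
  have "sqrt ((rho j)^CARD('n)) = rho j powr (real CARD('n) / 2)"
    using r by (simp add: powr_half_sqrt[symmetric] powr_realpow[symmetric] powr_powr)
  moreover have "(2 * rho j) powr (- real CARD('n) / 2) = 2 powr (- real CARD('n) / 2) * rho j powr (- real CARD('n) / 2)"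
    using r by (simp add: powr_mult)
  moreover have "rho j powr (real CARD('n) / 2) * rho j powr (- real CARD('n) / 2) = 1"
    using r by (simp add: powr_add[symmetric])
  ultimately show ?thesis unfolding mj_def
    by (simp add: real_sqrt_mult mult_ac)
qed




lemma phi_supp_dist:
  fixes p x :: "real^'n::finite"
  assumes "x \<in> cball p (rho J / 4)" "phi J p y \<noteq> 0"
  shows "rho J / 4 \<le> norm (x - y)"
proof -
  have "rho J / 2 < dist p y" using phi_supp[OF assms(2)] by simp
  moreover have "dist p x \<le> rho J / 4" using assms(1) by simp
  moreover have "dist p y \<le> dist p x + norm (x - y)"
    by (metis dist_norm dist_triangle)
  ultimately show ?thesis by linarith
qed

lemma P_lower:
  fixes p x :: "real^'n::finite"
  assumes J: "1 \<le> J" and x: "x \<in> cball p (rho J / 4)"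
  shows "real J * c1 TYPE('n) \<le> Pf (phi J p) x"
proof -
  obtain B where B: "\<And>z::real^'n. rho J / 4 \<le> norm z \<Longrightarrow> GG z \<le> B"
    using G_bounded_away[of "rho J / 4"] rho_pos[of J] by auto
  have I: "integrable lebesgue (\<lambda>y. GG (x - y) * phi J p y)"
    by (rule P_bound(1)[where \<sigma>="rho J / 4", OF B integrable_phi phi_nonneg]) (use phi_supp_dist[OF x] in auto)
  define lw where "lw y = (\<Sum>j\<in>{1..J}. indicator (Dsh p j) y / sqrt (mj TYPE('n) j) *
       (cL TYPE('n) * (2 * rho j) powr (- real CARD('n) / 2)))" for y
  have Ilw: "integrable lebesgue lw"
    unfolding lw_def
    by (rule Bochner_Integration.integrable_sum, rule integrable_mult_left, rule integrable_divide_zero, rule integrable_ind_D)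
  have "integral\<^sup>L lebesgue lw = (\<Sum>j\<in>{1..J}. integral\<^sup>L lebesgue (\<lambda>y. indicator (Dsh p j) y / sqrt (mj TYPE('n) j) *
       (cL TYPE('n) * (2 * rho j) powr (- real CARD('n) / 2))))"
    unfolding lw_def
    by (rule Bochner_Integration.integral_sum, rule integrable_mult_left, rule integrable_divide_zero, rule integrable_ind_D)
  also have "\<dots> = (\<Sum>j\<in>{1..J}. c1 TYPE('n))"
  proof (intro sum.cong refl)
    fix j assume j: "j \<in> {1..J}"
    have m: "mj TYPE('n) j > 0" by (rule mj_pos)
    have "integral\<^sup>L lebesgue (\<lambda>y. indicator (Dsh p j) y / sqrt (mj TYPE('n) j) *
       (cL TYPE('n) * (2 * rho j) powr (- real CARD('n) / 2)))
       = mj TYPE('n) j / sqrt (mj TYPE('n) j) * (cL TYPE('n) * (2 * rho j) powr (- real CARD('n) / 2))"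
      by (simp add: measure_Dsh)
    also have "mj TYPE('n) j / sqrt (mj TYPE('n) j) = sqrt (mj TYPE('n) j)"
      using m by (metis less_eq_real_def real_div_sqrt)
    also have "sqrt (mj TYPE('n) j) * (cL TYPE('n) * (2 * rho j) powr (- real CARD('n) / 2))
       = cL TYPE('n) * (sqrt (mj TYPE('n) j) * (2 * rho j) powr (- real CARD('n) / 2))" by simp
    also have "\<dots> = c1 TYPE('n)" unfolding sqrt_mj c1_def by simp
    finally show "integral\<^sup>L lebesgue (\<lambda>y. indicator (Dsh p j) y / sqrt (mj TYPE('n) j) *
       (cL TYPE('n) * (2 * rho j) powr (- real CARD('n) / 2))) = c1 TYPE('n)" .
  qed
  also have "\<dots> = real J * c1 TYPE('n)" by simp
  finally have Elw: "integral\<^sup>L lebesgue lw = real J * c1 TYPE('n)" .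
  have pw: "lw y \<le> GG (x - y) * phi J p y" for y
  proof -
    have "GG (x - y) * phi J p y = (\<Sum>j\<in>{1..J}. indicator (Dsh p j) y / sqrt (mj TYPE('n) j) * GG (x - y))"
      unfolding phi_def by (simp add: sum_distrib_left mult_ac)
    moreover have "lw y \<le> (\<Sum>j\<in>{1..J}. indicator (Dsh p j) y / sqrt (mj TYPE('n) j) * GG (x - y))"
      unfolding lw_def
    proof (intro sum_mono)
      fix j assume j: "j \<in> {1..J}"
      show "indicator (Dsh p j) y / sqrt (mj TYPE('n) j) * (cL TYPE('n) * (2 * rho j) powr (- real CARD('n) / 2))
          \<le> indicator (Dsh p j) y / sqrt (mj TYPE('n) j) * GG (x - y)"
      proof (cases "y \<in> Dsh p j")
        case True
        have yd: "rho j / 2 < dist p y" "dist p y \<le> rho j" using True unfolding Dsh_def by auto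
        have xd: "dist p x \<le> rho J / 4" using x by simp
        have rJ: "rho J \<le> rho j" using j by (intro rho_le) auto
        have rj: "rho j \<le> 1/2" using j by (intro rho_half) auto
        have tri1: "dist p y \<le> dist p x + norm (x - y)" by (metis dist_norm dist_triangle)
        have tri2: "norm (x - y) \<le> dist p x + dist p y"
          by (metis dist_commute dist_norm dist_triangle)
        have n0: "0 < norm (x - y)" using yd xd rJ tri1 rho_pos[of J] by linarith
        have n1: "norm (x - y) \<le> 2 * rho j" using yd xd rJ tri2 rho_pos[of J] by linarith
        have n2: "norm (x - y) \<le> 1" using n1 rj by linarith
        have "cL TYPE('n) * (2 * rho j) powr (- real CARD('n) / 2) \<le> cL TYPE('n) * norm (x - y) powr (- real CARD('n) / 2)"
          using n0 n1 cL_pos[where 'n='n] by (intro mult_left_mono powr_mono2') auto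
        also have "\<dots> \<le> GG (x - y)" by (rule G_lower[OF n0 n2])
        finally show ?thesis using mj_pos[where 'n='n, of j] by (intro mult_left_mono) auto
      qed simp
    qed
    ultimately show ?thesis by simp
  qed
  have "real J * c1 TYPE('n) \<le> integral\<^sup>L lebesgue (\<lambda>y. GG (x - y) * phi J p y)"
    unfolding Elw[symmetric] by (rule integral_mono[OF Ilw I pw])
  thus ?thesis unfolding Pf_def .
qed




lemma lin_solve:
  fixes a :: "'i \<Rightarrow> nat \<Rightarrow> complex"
  assumes "finite I" "k < card I"
  shows "\<exists>c. (\<exists>i\<in>I. c i \<noteq> 0) \<and> (\<forall>j<k. (\<Sum>i\<in>I. c i * a i j) = 0)"
  using assms
proof (induction k arbitrary: I a)
  case 0
  then obtain i where "i \<in> I" by (metis card.empty ex_in_conv less_irrefl)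
  thus ?case by (intro exI[of _ "\<lambda>_. 1"]) auto
next
  case (Suc k)
  show ?case
  proof (cases "\<forall>i\<in>I. a i k = 0")
    case True
    obtain c where c: "\<exists>i\<in>I. c i \<noteq> 0" "\<forall>j<k. (\<Sum>i\<in>I. c i * a i j) = 0"
      using Suc.IH[of I a] Suc.prems by auto
    have "\<forall>j<Suc k. (\<Sum>i\<in>I. c i * a i j) = 0"
    proof (intro allI impI)
      fix j assume "j < Suc k"
      thus "(\<Sum>i\<in>I. c i * a i j) = 0"
        using c(2) True by (cases "j = k") auto
    qed
    thus ?thesis using c(1) by blast
  next
    case False
    then obtain p where p: "p \<in> I" "a p k \<noteq> 0" by blast
    define I' where "I' = I - {p}"
    have fI': "finite I'" using Suc.prems unfolding I'_def by auto
    have cI': "k < card I'" using Suc.prems p unfolding I'_def by (simp add: card_Diff_singleton)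
    define b where "b i j = a i j - a i k / a p k * a p j" for i j
    obtain d where d: "\<exists>i\<in>I'. d i \<noteq> 0" "\<forall>j<k. (\<Sum>i\<in>I'. d i * b i j) = 0"
      using Suc.IH[OF fI' cI', of b] by auto
    define c where "c = d(p := - (\<Sum>i\<in>I'. d i * a i k) / a p k)"
    have eq: "(\<Sum>i\<in>I. c i * a i j) = (\<Sum>i\<in>I'. d i * b i j)" for j
    proof -
      have h1: "(\<Sum>i\<in>I. c i * a i j) = c p * a p j + (\<Sum>i\<in>I'. c i * a i j)"
        unfolding I'_def using Suc.prems(1) p(1) by (simp add: sum.remove)
      have h2: "(\<Sum>i\<in>I'. c i * a i j) = (\<Sum>i\<in>I'. d i * a i j)"
        unfolding c_def I'_def by (intro sum.cong) auto
      have h3: "(\<Sum>i\<in>I'. d i * b i j) = (\<Sum>i\<in>I'. d i * a i j) - (\<Sum>i\<in>I'. d i * a i k) / a p k * a p j"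
        unfolding b_def by (simp add: algebra_simps sum_subtractf sum_distrib_left sum_divide_distrib sum_distrib_right)
      have cp: "c p = - (\<Sum>i\<in>I'. d i * a i k) / a p k" unfolding c_def by simp
      show ?thesis unfolding h1 h2 h3 cp by (simp add: algebra_simps)
    qed
    have "\<forall>j<Suc k. (\<Sum>i\<in>I. c i * a i j) = 0"
    proof (intro allI impI)
      fix j assume "j < Suc k"
      show "(\<Sum>i\<in>I. c i * a i j) = 0"
      proof (cases "j = k")
        case True
        have "b i k = 0" for i unfolding b_def using p(2) by simp
        thus ?thesis unfolding eq True by simp
      next
        case False
        thus ?thesis unfolding eq using d(2) \<open>j < Suc k\<close> by simp
      qed
    qed
    moreover have "\<exists>i\<in>I. c i \<noteq> 0" using d(1) unfolding c_def I'_def by auto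
    ultimately show ?thesis by blast
  qed
qed




lemma weak_lb:
  fixes f :: "'n::finite fn"
  assumes lam: "0 \<le> lam"
    and H: "\<And>u v :: nat \<Rightarrow> 'n fn. (\<forall>i<k. u i \<in> l2 \<and> v i \<in> l2) \<Longrightarrow>
      \<exists>g\<in>l2. l2_norm g \<le> 1 \<and> (\<forall>i<k. l2_inner g (u i) = 0) \<and> lam \<le> cmod (sandwich_form f g g)"
  shows "ennreal (real (k+1) * lam) \<le> sandwich_weak_norm f"
proof -
  have "ennreal lam \<le> sandwich_sing_val f k"
    unfolding sandwich_sing_val_def
  proof (rule INF_greatest)
    fix uv :: "(nat \<Rightarrow> 'n fn) \<times> (nat \<Rightarrow> 'n fn)" assume "uv \<in> {(u, v). \<forall>i<k. u i \<in> l2 \<and> v i \<in> l2}"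
    then obtain u v :: "nat \<Rightarrow> 'n fn" where uv: "uv = (u, v)" "\<forall>i<k. u i \<in> l2 \<and> v i \<in> l2" by auto
    obtain g :: "'n fn" where g: "g \<in> l2" "l2_norm g \<le> 1" "\<forall>i<k. l2_inner g (u i) = 0" "lam \<le> cmod (sandwich_form f g g)"
      using H[OF uv(2)] by blast
    have s0: "(\<Sum>i<k. l2_inner g (u i) * l2_inner (v i) g) = 0" using g(3) by simp
    show "ennreal lam \<le> sandwich_dist f (fst uv) (snd uv) k"
      unfolding sandwich_dist_def uv fst_conv snd_conv
    proof (split if_split, intro conjI impI)
      show "ennreal lam \<le> \<infinity>" by simp
      assume "\<forall>g\<in>l2. \<forall>h\<in>l2. integrable lebesgue
           (\<lambda>x. f x * bessel_pot (real CARD('n) / 4) g x * cnj (bessel_pot (real CARD('n) / 4) h x))"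
      show "ennreal lam \<le> (SUP gh \<in> {(g, h). g \<in> l2 \<and> h \<in> l2 \<and> l2_norm g \<le> 1 \<and> l2_norm h \<le> 1}.
             ennreal (cmod (sandwich_form f (fst gh) (snd gh)
                - (\<Sum>i<k. l2_inner (fst gh) (u i) * l2_inner (v i) (snd gh)))))"
        apply (rule SUP_upper2[where i="(g, g)"])
        using g(1,2) apply simp
        using g(4) s0 by (simp add: ennreal_leI)
    qed
  qed
  hence "of_nat (k+1) * ennreal lam \<le> of_nat (k+1) * sandwich_sing_val f k"
    by (intro mult_left_mono) auto
  also have "\<dots> \<le> sandwich_weak_norm f"
    unfolding sandwich_weak_norm_def by (rule SUP_upper) simp
  finally show ?thesis using lam by (simp add: ennreal_mult' ennreal_of_nat_eq_real_of_nat)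
qed




definition pc :: "real \<Rightarrow> real^'n::finite \<Rightarrow> nat \<Rightarrow> real^'n" where
  "pc Rs e i = (real i * Rs) *\<^sub>R e"

lemma pc_dist:
  assumes "norm e = 1" "i \<noteq> j" "Rs \<ge> 0"
  shows "Rs \<le> dist (pc Rs e i) (pc Rs e j)"
proof -
  have "dist (pc Rs e i) (pc Rs e j) = norm ((real i * Rs - real j * Rs) *\<^sub>R e)"
    unfolding pc_def dist_norm by (simp add: scaleR_diff_left)
  also have "\<dots> = \<bar>real i - real j\<bar> * Rs" using assms by (simp add: left_diff_distrib[symmetric] abs_mult)
  finally have eq: "dist (pc Rs e i) (pc Rs e j) = \<bar>real i - real j\<bar> * Rs" .
  have "1 \<le> \<bar>real i - real j\<bar>" using assms(2) by linarith
  thus ?thesis unfolding eq using assms(3) by (metis mult_1 mult_right_mono)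
qed

lemma phi_disj:
  fixes e :: "real^'n::finite"
  assumes "norm e = 1" "i \<noteq> l" "Rs > 1" "phi J (pc Rs e i) y \<noteq> 0"
  shows "phi J (pc Rs e l) y = 0"
proof (rule ccontr)
  assume "phi J (pc Rs e l) y \<noteq> 0"
  hence "dist (pc Rs e l) y \<le> 1/2" using phi_supp by blast
  moreover have "dist (pc Rs e i) y \<le> 1/2" using phi_supp assms(4) by blast
  moreover have "Rs \<le> dist (pc Rs e i) (pc Rs e l)" using pc_dist[OF assms(1,2)] assms(3) by simp
  moreover have "dist (pc Rs e i) (pc Rs e l) \<le> dist (pc Rs e i) y + dist (pc Rs e l) y"
    using dist_triangle3[of "pc Rs e i" "pc Rs e l" y] by (simp add: dist_commute)
  ultimately show False using assms(3) by linarith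
qed

lemma sep_dist:
  fixes e x :: "real^'n::finite"
  assumes "norm e = 1" "i \<noteq> l" "Rs \<ge> 0" "x \<in> cball (pc Rs e i) r" "r \<le> 1/2" "phi J (pc Rs e l) y \<noteq> 0"
  shows "Rs - 1 \<le> norm (x - y)"
proof -
  have "dist (pc Rs e l) y \<le> 1/2" using phi_supp assms(6) by blast
  moreover have "dist (pc Rs e i) x \<le> r" using assms(4) by simp
  moreover have "Rs \<le> dist (pc Rs e i) (pc Rs e l)" using pc_dist[OF assms(1,2,3)] by simp
  moreover have "dist (pc Rs e i) (pc Rs e l) \<le> dist (pc Rs e i) x + dist x (pc Rs e l)"
    by (rule dist_triangle)
  moreover have "dist x (pc Rs e l) \<le> dist x y + dist y (pc Rs e l)"
    by (rule dist_triangle)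
  moreover have "dist y (pc Rs e l) = dist (pc Rs e l) y" by (rule dist_commute)
  ultimately show ?thesis using assms(5) by (simp add: dist_norm)
qed

definition gfun :: "nat \<Rightarrow> real \<Rightarrow> real^'n::finite \<Rightarrow> nat \<Rightarrow> (nat \<Rightarrow> complex) \<Rightarrow> 'n fn" where
  "gfun J Rs e k c y = (\<Sum>i\<le>k. c i * complex_of_real (phi J (pc Rs e i) y))"

lemma gfun_meas[measurable]: "gfun J Rs e k c \<in> borel_measurable borel"
  unfolding gfun_def by measurable

lemma gfun_sq:
  fixes e :: "real^'n::finite"
  assumes "norm e = 1" "Rs > 1"
  shows "(cmod (gfun J Rs e k c y))^2 = (\<Sum>i\<le>k. (cmod (c i))^2 * (phi J (pc Rs e i) y)^2)"
proof (cases "\<exists>i\<le>k. phi J (pc Rs e i) y \<noteq> 0")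
  case True
  then obtain i where i: "i \<le> k" "phi J (pc Rs e i) y \<noteq> 0" by blast
  have z: "l \<noteq> i \<Longrightarrow> phi J (pc Rs e l) y = 0" for l using phi_disj[OF assms(1) _ assms(2) i(2)] by metis
  have "gfun J Rs e k c y = c i * complex_of_real (phi J (pc Rs e i) y)"
    unfolding gfun_def by (subst sum.remove[of _ i]) (use i z in auto)
  moreover have "(\<Sum>i\<le>k. (cmod (c i))^2 * (phi J (pc Rs e i) y)^2) = (cmod (c i))^2 * (phi J (pc Rs e i) y)^2"
    by (subst sum.remove[of _ i]) (use i z in auto)
  ultimately show ?thesis by (simp add: norm_mult power_mult_distrib)
next
  case False
  thus ?thesis unfolding gfun_def by auto
qed

lemma gfun_l2:
  fixes e :: "real^'n::finite"
  assumes "norm e = 1" "Rs > 1"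
  shows "gfun J Rs e k c \<in> l2"
    "integral\<^sup>L lebesgue (\<lambda>y. (cmod (gfun J Rs e k c y))^2) = real J * (\<Sum>i\<le>k. (cmod (c i))^2)"
proof -
  have int: "integrable lebesgue (\<lambda>y. (\<Sum>i\<le>k. (cmod (c i))^2 * (phi J (pc Rs e i) y)^2))"
    by (rule Bochner_Integration.integrable_sum, rule integrable_mult_right, rule integrable_phi_sq)
  show "gfun J Rs e k c \<in> l2"
    unfolding l2_def using int gfun_sq[OF assms] 
    by (auto intro: measurable_completion)
  have "integral\<^sup>L lebesgue (\<lambda>y. (cmod (gfun J Rs e k c y))^2)
      = integral\<^sup>L lebesgue (\<lambda>y. (\<Sum>i\<le>k. (cmod (c i))^2 * (phi J (pc Rs e i) y)^2))"
    using gfun_sq[OF assms] by simp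
  also have "\<dots> = (\<Sum>i\<le>k. (cmod (c i))^2 * real J)"
    by (subst Bochner_Integration.integral_sum) (auto simp: phi_sq_integral integrable_phi_sq)
  finally show "integral\<^sup>L lebesgue (\<lambda>y. (cmod (gfun J Rs e k c y))^2) = real J * (\<Sum>i\<le>k. (cmod (c i))^2)"
    by (simp add: sum_distrib_left mult_ac)
qed

lemma cnj_meas[measurable]: "f \<in> borel_measurable M \<Longrightarrow> (\<lambda>x. cnj (f x)) \<in> borel_measurable M"
  for f :: "'a \<Rightarrow> complex"
  by (rule borel_measurable_continuous_on[where f=cnj]) (auto intro: continuous_intros)

lemma phi_inner_integrable:
  fixes p :: "real^'n::finite"
  assumes "u \<in> l2"
  shows "integrable lebesgue (\<lambda>y. complex_of_real (phi J p y) * cnj (u y))"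
proof (rule Bochner_Integration.integrable_bound)
  show "integrable lebesgue (\<lambda>y. (phi J p y)^2 + (cmod (u y))^2)"
    using assms integrable_phi_sq[of J p] unfolding l2_def by auto
  show "(\<lambda>y. complex_of_real (phi J p y) * cnj (u y)) \<in> borel_measurable lebesgue"
  proof -
    have u: "u \<in> borel_measurable lebesgue" using assms unfolding l2_def by auto
    have "(\<lambda>y. complex_of_real (phi J p y)) \<in> borel_measurable lebesgue" by measurable
    moreover have "(\<lambda>y. cnj (u y)) \<in> borel_measurable lebesgue" using u by measurable
    ultimately show ?thesis by (rule borel_measurable_times)
  qed
  show "AE y in lebesgue. norm (complex_of_real (phi J p y) * cnj (u y)) \<le> norm ((phi J p y)^2 + (cmod (u y))^2)"
  proof (rule AE_I2)
    fix y
    have "norm (complex_of_real (phi J p y) * cnj (u y)) = \<bar>phi J p y\<bar> * cmod (u y)" by (simp add: norm_mult)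
    also have "\<dots> \<le> (phi J p y)^2 + (cmod (u y))^2"
    proof -
      have sq: "0 \<le> (\<bar>phi J p y\<bar> - cmod (u y))^2" by simp
      have nn: "0 \<le> \<bar>phi J p y\<bar> * cmod (u y)" by simp
      have "(\<bar>phi J p y\<bar> - cmod (u y))^2 = (phi J p y)^2 - 2 * (\<bar>phi J p y\<bar> * cmod (u y)) + (cmod (u y))^2"
        by (simp add: power2_diff power2_abs)
      thus ?thesis using sq nn by linarith
    qed
    finally show "norm (complex_of_real (phi J p y) * cnj (u y)) \<le> norm ((phi J p y)^2 + (cmod (u y))^2)" by simp
  qed
qed

lemma gfun_inner:
  fixes e :: "real^'n::finite"
  assumes "u \<in> l2"
  shows "l2_inner (gfun J Rs e k c) u = (\<Sum>i\<le>k. c i * l2_inner (\<lambda>y. complex_of_real (phi J (pc Rs e i) y)) u)"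
proof -
  have "l2_inner (gfun J Rs e k c) u = (\<integral>y. (\<Sum>i\<le>k. c i * (complex_of_real (phi J (pc Rs e i) y) * cnj (u y))) \<partial>lebesgue)"
    unfolding l2_inner_def gfun_def by (intro Bochner_Integration.integral_cong refl) (simp add: sum_distrib_right mult.assoc)
  also have "\<dots> = (\<Sum>i\<le>k. c i * l2_inner (\<lambda>y. complex_of_real (phi J (pc Rs e i) y)) u)"
    unfolding l2_inner_def
    by (subst Bochner_Integration.integral_sum) (auto intro!: phi_inner_integrable assms)
  finally show ?thesis .
qed




lemma bp_gfun:
  fixes e x :: "real^'n::finite"
  assumes I: "\<And>l. l \<le> k \<Longrightarrow> integrable lebesgue (\<lambda>y. GG (x - y) * phi J (pc Rs e l) y)"
  shows "bessel_pot (real CARD('n) / 4) (gfun J Rs e k c) x = (\<Sum>l\<le>k. c l * complex_of_real (Pf (phi J (pc Rs e l)) x))"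
proof -
  have "bessel_pot (real CARD('n) / 4) (gfun J Rs e k c) x
      = (\<integral>y. (\<Sum>l\<le>k. c l * complex_of_real (GG (x - y) * phi J (pc Rs e l) y)) \<partial>lebesgue)"
    unfolding bessel_pot_def gfun_def
    by (intro Bochner_Integration.integral_cong refl) (simp add: sum_distrib_left mult_ac)
  also have "\<dots> = (\<Sum>l\<le>k. (\<integral>y. c l * complex_of_real (GG (x - y) * phi J (pc Rs e l) y) \<partial>lebesgue))"
    by (rule Bochner_Integration.integral_sum) (intro integrable_mult_right integrable_of_real I, simp)
  also have "\<dots> = (\<Sum>l\<le>k. c l * complex_of_real (Pf (phi J (pc Rs e l)) x))"
    unfolding Pf_def by (intro sum.cong refl) (simp only: integral_mult_right_zero integral_complex_of_real)
  finally show ?thesis .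
qed

lemma bp_meas:
  fixes g :: "'n::finite fn"
  assumes g[measurable]: "g \<in> borel_measurable borel"
  shows "bessel_pot b g \<in> borel_measurable lebesgue"
proof -
  have [measurable]: "bessel_kernel b \<in> borel_measurable borel" by (rule G_meas)
  have eq: "bessel_pot b g = (\<lambda>x. \<integral>y. complex_of_real (bessel_kernel b (x - y)) * g y \<partial>lborel)"
    unfolding bessel_pot_def
    by (intro ext integral_completion) measurable
  have "(\<lambda>x. \<integral>y. complex_of_real (bessel_kernel b (x - y)) * g y \<partial>lborel) \<in> borel_measurable lborel"
  proof (rule lborel.borel_measurable_lebesgue_integral)
    have [measurable]: "bessel_kernel b \<in> borel_measurable borel" by (rule G_meas)
    show "case_prod (\<lambda>x y. complex_of_real (bessel_kernel b (x - y)) * g y) \<in> borel_measurable (lborel \<Otimes>\<^sub>M lborel)"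
      by measurable
  qed
  thus ?thesis unfolding eq by (rule measurable_completion)
qed




definition Phi1 :: "'n::finite itself \<Rightarrow> nat \<Rightarrow> real" where
  "Phi1 _ J = (\<Sum>j\<in>{1..J}. sqrt (mj TYPE('n) j))"

lemma integral_phi: "integral\<^sup>L lebesgue (phi J (p::real^'n::finite)) = Phi1 TYPE('n) J"
proof -
  have "integral\<^sup>L lebesgue (phi J p) = (\<Sum>j\<in>{1..J}. integral\<^sup>L lebesgue (\<lambda>y. indicator (Dsh p j) y / sqrt (mj TYPE('n) j)))"
    unfolding phi_def by (rule Bochner_Integration.integral_sum, rule integrable_divide_zero, rule integrable_ind_D)
  also have "\<dots> = Phi1 TYPE('n) J"
    unfolding Phi1_def
  proof (intro sum.cong refl)
    fix j
    have m: "mj TYPE('n) j > 0" by (rule mj_pos)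
    show "integral\<^sup>L lebesgue (\<lambda>y. indicator (Dsh p j) y / sqrt (mj TYPE('n) j)) = sqrt (mj TYPE('n) j)"
      using m by (simp add: measure_Dsh) (metis less_eq_real_def real_div_sqrt)
  qed
  finally show ?thesis .
qed

lemma Phi1_nonneg: "0 \<le> Phi1 TYPE('n::finite) J"
  unfolding Phi1_def using mj_pos[where 'n='n] by (intro sum_nonneg) (auto simp: less_imp_le)

lemma sq_lower:
  fixes a b z :: real
  assumes "0 \<le> a" "0 \<le> b" "a - b \<le> z" "0 \<le> z"
  shows "a^2 / 2 - b^2 \<le> z^2"
proof (cases "b \<le> a")
  case True
  hence "(a - b)^2 \<le> z^2" using assms by (intro power_mono) auto
  moreover have "a^2/2 - b^2 \<le> (a - b)^2"
  proof -
    have "0 \<le> (a/2 - b)^2 * 2" by simp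
    thus ?thesis by (simp add: power2_eq_square algebra_simps)
  qed
  ultimately show ?thesis by linarith
next
  case False
  hence "a^2 \<le> b^2" using assms by (intro power_mono) auto
  thus ?thesis using zero_le_power2[of z] zero_le_power2[of a] by linarith
qed




definition Sset :: "real \<Rightarrow> real^'n::finite \<Rightarrow> nat \<Rightarrow> real \<Rightarrow> (real^'n) set" where
  "Sset Rs e k r = (\<Union>i\<le>k. cball (pc Rs e i) r)"

lemma Sset_sets[measurable]: "Sset Rs e k r \<in> sets borel" "Sset Rs e k r \<in> sets lebesgue"
  unfolding Sset_def by auto

lemma Sset_bounded: "bounded (Sset Rs e k r)"
  unfolding Sset_def by auto

lemma local_facts:
  fixes e x :: "real^'n::finite"
  assumes J: "1 \<le> J" and e: "norm e = 1" and Rs: "2 \<le> Rs" and r: "0 < r" "r \<le> rho J / 4"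
   and BnA: "\<forall>z::real^'n. rho J / 4 \<le> norm z \<longrightarrow> GG z \<le> Bn" and Bn2: "0 \<le> Bn"
   and BfA: "\<forall>z::real^'n. Rs - 1 \<le> norm z \<longrightarrow> GG z \<le> Bf" and Bf2: "0 \<le> Bf"
   and i: "i \<le> k" and x: "x \<in> cball (pc Rs e i) r"
  shows "bessel_pot (real CARD('n) / 4) (gfun J Rs e k c) x = (\<Sum>l\<le>k. c l * complex_of_real (Pf (phi J (pc Rs e l)) x))"
    "real J * c1 TYPE('n) \<le> Pf (phi J (pc Rs e i)) x"
    "Pf (phi J (pc Rs e i)) x \<le> Bn * Phi1 TYPE('n) J"
    "\<And>l. l \<noteq> i \<Longrightarrow> 0 \<le> Pf (phi J (pc Rs e l)) x \<and> Pf (phi J (pc Rs e l)) x \<le> Bf * Phi1 TYPE('n) J"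
proof -
  have Bn: "\<And>z::real^'n. rho J / 4 \<le> norm z \<Longrightarrow> GG z \<le> Bn" using BnA by blast
  have Bf: "\<And>z::real^'n. Rs - 1 \<le> norm z \<Longrightarrow> GG z \<le> Bf" using BfA by blast
  have rJ: "rho J \<le> 1/2" using J by (rule rho_half)
  have xn: "x \<in> cball (pc Rs e i) (rho J / 4)" using x r by auto
  have r2: "r \<le> 1/2" using r rJ rho_pos[of J] by linarith
  have near: "integrable lebesgue (\<lambda>y. GG (x - y) * phi J (pc Rs e i) y)"
             "Pf (phi J (pc Rs e i)) x \<le> Bn * Phi1 TYPE('n) J"
    using P_bound[where \<sigma>="rho J / 4", OF Bn integrable_phi[of J "pc Rs e i"] phi_nonneg, where x=x]
      phi_supp_dist[OF xn] by (auto simp: integral_phi)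
  have far: "integrable lebesgue (\<lambda>y. GG (x - y) * phi J (pc Rs e l) y) \<and>
             0 \<le> Pf (phi J (pc Rs e l)) x \<and> Pf (phi J (pc Rs e l)) x \<le> Bf * Phi1 TYPE('n) J" if l: "l \<noteq> i" for l
    using P_bound[where \<sigma>="Rs - 1", OF Bf integrable_phi[of J "pc Rs e l"] phi_nonneg, where x=x]
      sep_dist[OF e l[symmetric] _ x r2] Rs by (auto simp: integral_phi)
  show "bessel_pot (real CARD('n) / 4) (gfun J Rs e k c) x = (\<Sum>l\<le>k. c l * complex_of_real (Pf (phi J (pc Rs e l)) x))"
    by (rule bp_gfun) (use near far in metis)
  show "real J * c1 TYPE('n) \<le> Pf (phi J (pc Rs e i)) x" by (rule P_lower[OF J xn])
  show "Pf (phi J (pc Rs e i)) x \<le> Bn * Phi1 TYPE('n) J" by (rule near(2))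
  show "\<And>l. l \<noteq> i \<Longrightarrow> 0 \<le> Pf (phi J (pc Rs e l)) x \<and> Pf (phi J (pc Rs e l)) x \<le> Bf * Phi1 TYPE('n) J"
    using far by blast
qed




lemma cball_disj:
  fixes e :: "real^'n::finite"
  assumes e: "norm e = 1" and Rs: "2 \<le> Rs" and r: "r \<le> 1/2" and ij: "i \<noteq> j"
  shows "cball (pc Rs e i) r \<inter> cball (pc Rs e j) r = {}"
proof (rule ccontr)
  assume "cball (pc Rs e i) r \<inter> cball (pc Rs e j) r \<noteq> {}"
  then obtain x where x: "dist (pc Rs e i) x \<le> r" "dist (pc Rs e j) x \<le> r" by auto
  have "Rs \<le> dist (pc Rs e i) (pc Rs e j)" using pc_dist[OF e ij] Rs by simp
  moreover have "dist (pc Rs e i) (pc Rs e j) \<le> dist (pc Rs e i) x + dist (pc Rs e j) x"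
    using dist_triangle3[of "pc Rs e i" "pc Rs e j" x] by (simp add: dist_commute)
  ultimately show False using x r Rs by linarith
qed

lemma form_lb:
  fixes e :: "real^'n::finite" and c :: "nat \<Rightarrow> complex"
  assumes J: "1 \<le> J" and e: "norm e = 1" and Rs: "2 \<le> Rs" and r: "0 < r" "r \<le> rho J / 4" and eps: "0 < \<epsilon>"
   and Bn: "\<And>z::real^'n. rho J / 4 \<le> norm z \<Longrightarrow> GG z \<le> Bn" "0 \<le> Bn"
   and Bf: "\<And>z::real^'n. Rs - 1 \<le> norm z \<Longrightarrow> GG z \<le> Bf" "0 \<le> Bf"
  defines "\<delta> \<equiv> Bf * Phi1 TYPE('n) J"
  shows "\<epsilon> * (om TYPE('n) * r^CARD('n)) * (\<Sum>i\<le>k. (cmod (c i) * (real J * c1 TYPE('n)))^2/2 - (\<delta> * (\<Sum>l\<le>k. cmod (c l)))^2)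
     \<le> cmod (sandwich_form (\<lambda>x. complex_of_real (\<epsilon> * indicator (Sset Rs e k r) x)) (gfun J Rs e k c) (gfun J Rs e k c))"
proof -
  define S where "S = Sset Rs e k r"
  define A where "A = bessel_pot (real CARD('n) / 4) (gfun J Rs e k c)"
  define P where "P l x = Pf (phi J (pc Rs e l)) x" for l x
  define LB where "LB i = (cmod (c i) * (real J * c1 TYPE('n)))^2/2 - (\<delta> * (\<Sum>l\<le>k. cmod (c l)))^2" for i
  define Mb where "Mb = (\<Sum>l\<le>k. cmod (c l)) * (Bn * Phi1 TYPE('n) J + \<delta>)"
  have rJ: "rho J \<le> 1/2" using J by (rule rho_half)
  have r2: "r \<le> 1/2" using r rJ rho_pos[of J] by linarith
  have dn: "0 \<le> \<delta>" unfolding \<delta>_def using Bf(2) Phi1_nonneg[where 'n='n, of J] by simp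
  have disj: "i \<noteq> j \<Longrightarrow> cball (pc Rs e i) r \<inter> cball (pc Rs e j) r = {}" for i j
    by (rule cball_disj[OF e Rs r2])
  have BnA: "\<forall>z::real^'n. rho J / 4 \<le> norm z \<longrightarrow> GG z \<le> Bn" using Bn(1) by blast
  have BfA: "\<forall>z::real^'n. Rs - 1 \<le> norm z \<longrightarrow> GG z \<le> Bf" using Bf(1) by blast
  note LF = local_facts[OF J e Rs r(1) r(2) BnA Bn(2) BfA Bf(2)]
  have Alow: "LB i \<le> (cmod (A x))^2" if i: "i \<le> k" and x: "x \<in> cball (pc Rs e i) r" for i x
  proof -
    have Aeq: "A x = c i * complex_of_real (P i x) + (\<Sum>l\<in>{..k} - {i}. c l * complex_of_real (P l x))"
      unfolding A_def P_def LF(1)[OF i x] using i by (simp add: sum.remove)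
    have Pi: "real J * c1 TYPE('n) \<le> P i x" unfolding P_def by (rule LF(2)[OF i x])
    have Pl: "0 \<le> P l x \<and> P l x \<le> \<delta>" if "l \<noteq> i" for l unfolding P_def \<delta>_def using LF(4)[OF i x that] .
    have "cmod (\<Sum>l\<in>{..k} - {i}. c l * complex_of_real (P l x)) \<le> (\<Sum>l\<in>{..k} - {i}. cmod (c l) * \<delta>)"
    proof -
      have "cmod (\<Sum>l\<in>{..k} - {i}. c l * complex_of_real (P l x)) \<le> (\<Sum>l\<in>{..k} - {i}. cmod (c l * complex_of_real (P l x)))"
        by (rule norm_sum)
      also have "\<dots> \<le> (\<Sum>l\<in>{..k} - {i}. cmod (c l) * \<delta>)"
        using Pl by (intro sum_mono) (auto simp: norm_mult intro!: mult_left_mono)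
      finally show ?thesis .
    qed
    also have "\<dots> \<le> (\<Sum>l\<le>k. cmod (c l) * \<delta>)" using dn by (intro sum_mono2) auto
    also have "\<dots> = \<delta> * (\<Sum>l\<le>k. cmod (c l))" by (simp add: sum_distrib_left mult_ac)
    finally have rest: "cmod (\<Sum>l\<in>{..k} - {i}. c l * complex_of_real (P l x)) \<le> \<delta> * (\<Sum>l\<le>k. cmod (c l))" .
    have main: "cmod (c i) * (real J * c1 TYPE('n)) \<le> cmod (c i * complex_of_real (P i x))"
      using Pi c1_pos[where 'n='n] by (simp add: norm_mult mult_left_mono)
    have "cmod (c i * complex_of_real (P i x)) - cmod (\<Sum>l\<in>{..k} - {i}. c l * complex_of_real (P l x)) \<le> cmod (A x)"
      unfolding Aeq by (rule norm_diff_ineq)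
    hence "cmod (c i) * (real J * c1 TYPE('n)) - \<delta> * (\<Sum>l\<le>k. cmod (c l)) \<le> cmod (A x)"
      using main rest by linarith
    thus ?thesis unfolding LB_def
      by (intro sq_lower) (use c1_pos[where 'n='n] dn in \<open>auto intro!: sum_nonneg mult_nonneg_nonneg\<close>)
  qed
  have Aup: "cmod (A x) \<le> Mb" if i: "i \<le> k" and x: "x \<in> cball (pc Rs e i) r" for i x
  proof -
    have "cmod (A x) \<le> (\<Sum>l\<le>k. cmod (c l * complex_of_real (P l x)))"
      unfolding A_def P_def LF(1)[OF i x] by (rule norm_sum)
    also have "\<dots> \<le> (\<Sum>l\<le>k. cmod (c l) * (Bn * Phi1 TYPE('n) J + \<delta>))"
    proof (intro sum_mono)
      fix l assume l: "l \<in> {..k}"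
      have "0 \<le> P l x \<and> P l x \<le> Bn * Phi1 TYPE('n) J + \<delta>"
      proof (cases "l = i")
        case True
        have "real J * c1 TYPE('n) \<le> P l x" unfolding P_def True by (rule LF(2)[OF i x])
        moreover have "P l x \<le> Bn * Phi1 TYPE('n) J" unfolding P_def True by (rule LF(3)[OF i x])
        ultimately show ?thesis using c1_pos[where 'n='n] dn by (smt (verit) of_nat_0_le_iff mult_nonneg_nonneg)
      next
        case False
        thus ?thesis using LF(4)[OF i x False] Bn(2) Phi1_nonneg[where 'n='n, of J] unfolding P_def \<delta>_def
          by (smt (verit) mult_nonneg_nonneg)
      qed
      thus "cmod (c l * complex_of_real (P l x)) \<le> cmod (c l) * (Bn * Phi1 TYPE('n) J + \<delta>)"
        by (simp add: norm_mult mult_left_mono)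
    qed
    also have "\<dots> = Mb" unfolding Mb_def by (simp add: sum_distrib_right)
    finally show ?thesis .
  qed
  define F where "F x = \<epsilon> * indicator S x * (cmod (A x))^2" for x
  have Ameas: "A \<in> borel_measurable lebesgue" unfolding A_def by (rule bp_meas) simp
  have Fmeas: "F \<in> borel_measurable lebesgue" unfolding F_def S_def using Ameas by measurable
  have Sfin: "emeasure lebesgue S < \<infinity>"
  proof -
    have "emeasure lebesgue S = emeasure lborel S" unfolding S_def by (simp add: emeasure_completion)
    also have "\<dots> < \<infinity>" unfolding S_def by (rule emeasure_bounded_finite[OF Sset_bounded])
    finally show ?thesis .
  qed
  have Fint: "integrable lebesgue F"
  proof (rule Bochner_Integration.integrable_bound[OF _ Fmeas AE_I2])
    show "integrable lebesgue (\<lambda>x. indicator S x * (\<epsilon> * Mb^2))"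
      by (intro integrable_mult_left integrable_real_indicator Sfin) (simp add: S_def)
    fix x
    show "norm (F x) \<le> norm (indicator S x * (\<epsilon> * Mb^2))"
    proof (cases "x \<in> S")
      case True
      then obtain i where i: "i \<le> k" "x \<in> cball (pc Rs e i) r" unfolding S_def Sset_def by auto
      have "cmod (A x) \<le> Mb" by (rule Aup[OF i])
      hence "(cmod (A x))^2 \<le> Mb^2" by (intro power_mono) auto
      thus ?thesis using True eps unfolding F_def by (simp add: abs_mult)
    qed (simp add: F_def)
  qed
  have form: "sandwich_form (\<lambda>x. complex_of_real (\<epsilon> * indicator S x)) (gfun J Rs e k c) (gfun J Rs e k c)
       = complex_of_real (integral\<^sup>L lebesgue F)"
  proof -
    have "sandwich_form (\<lambda>x. complex_of_real (\<epsilon> * indicator S x)) (gfun J Rs e k c) (gfun J Rs e k c)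
       = (\<integral>x. complex_of_real (F x) \<partial>lebesgue)"
      unfolding sandwich_form_def A_def[symmetric]
    proof (intro Bochner_Integration.integral_cong refl)
      fix x
      show "complex_of_real (\<epsilon> * indicator S x) * A x * cnj (A x) = complex_of_real (F x)"
        unfolding F_def using complex_norm_square[of "A x"] by (simp add: mult.assoc del: of_real_power)
    qed
    thus ?thesis by simp
  qed
  define lw where "lw x = (\<Sum>i\<le>k. indicator (cball (pc Rs e i) r) x * (\<epsilon> * LB i))" for x
  have cfin: "emeasure lebesgue (cball p r) < \<infinity>" for p :: "real^'n"
    by (subst emeasure_leb_cball) (use r in auto)
  have lwint: "integrable lebesgue lw"
    unfolding lw_def
    by (rule Bochner_Integration.integrable_sum, rule integrable_mult_left, rule integrable_real_indicator, simp, rule cfin)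
  have lwI: "integral\<^sup>L lebesgue lw = (\<Sum>i\<le>k. (om TYPE('n) * r^CARD('n)) * (\<epsilon> * LB i))"
  proof -
    have ii: "integrable lebesgue (\<lambda>x. indicator (cball p r) x * a)" for p :: "real^'n" and a :: real
      by (rule integrable_mult_left, rule integrable_real_indicator, simp, rule cfin)
    have cc: "measure lebesgue (cball p r) = om TYPE('n) * r^CARD('n)" for p :: "real^'n"
      using measure_leb_cball[of r p] r by simp
    have ci: "integral\<^sup>L lebesgue (indicat_real (cball p r)) = om TYPE('n) * r^CARD('n)" for p :: "real^'n"
    proof -
      have "integral\<^sup>L lebesgue (indicat_real (cball p r)) = measure lebesgue (cball p r \<inter> space lebesgue)"
        by (rule Bochner_Integration.integral_indicator)
      also have "cball p r \<inter> space lebesgue = cball p r" by simp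
      finally show ?thesis using cc by simp
    qed
    show ?thesis
      unfolding lw_def
      apply (subst Bochner_Integration.integral_sum)
       apply (rule ii)
      apply (intro sum.cong refl)
      apply (subst integral_mult_left_zero)
      apply (simp only: ci)
      done
  qed
  have lwF: "lw x \<le> F x" for x
  proof (cases "x \<in> S")
    case True
    then obtain i where i: "i \<le> k" "x \<in> cball (pc Rs e i) r" unfolding S_def Sset_def by auto
    have other: "l \<noteq> i \<Longrightarrow> x \<notin> cball (pc Rs e l) r" for l using disj[of l i] i by auto
    have "lw x = \<epsilon> * LB i"
      unfolding lw_def by (subst sum.remove[of _ i]) (use i other in auto)
    also have "\<dots> \<le> \<epsilon> * (cmod (A x))^2" using Alow[OF i] eps by simp
    also have "\<dots> = F x" using True unfolding F_def by simp
    finally show ?thesis .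
  next
    case False
    hence "x \<notin> cball (pc Rs e i) r" if "i \<le> k" for i using that unfolding S_def Sset_def by auto
    thus ?thesis unfolding lw_def F_def using False by auto
  qed
  have "integral\<^sup>L lebesgue lw \<le> integral\<^sup>L lebesgue F" by (rule integral_mono[OF lwint Fint lwF])
  also have "\<dots> \<le> cmod (complex_of_real (integral\<^sup>L lebesgue F))" by simp
  finally have "(\<Sum>i\<le>k. (om TYPE('n) * r^CARD('n)) * (\<epsilon> * LB i)) \<le> cmod (sandwich_form (\<lambda>x. complex_of_real (\<epsilon> * indicator S x)) (gfun J Rs e k c) (gfun J Rs e k c))"
    unfolding lwI form .
  moreover have "(\<Sum>i\<le>k. (om TYPE('n) * r^CARD('n)) * (\<epsilon> * LB i)) = \<epsilon> * (om TYPE('n) * r^CARD('n)) * (\<Sum>i\<le>k. LB i)"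
    unfolding sum_distrib_left[of "\<epsilon> * (om TYPE('n) * r^CARD('n))"] by (simp add: mult_ac)
  ultimately show ?thesis unfolding LB_def S_def by simp
qed




lemma LB_sum:
  fixes c :: "nat \<Rightarrow> complex"
  assumes J: "1 \<le> J" and cs: "(\<Sum>i\<le>k. (cmod (c i))^2) = 1 / real J"
    and d0: "0 \<le> d" and dle: "d \<le> real J * c1 TYPE('n::finite) / (2 * (real k + 1))"
  shows "real J * (c1 TYPE('n))^2 / 4 \<le> (\<Sum>i\<le>k. (cmod (c i) * (real J * c1 TYPE('n)))^2/2 - (d * (\<Sum>l\<le>k. cmod (c l)))^2)"
proof -
  define C where "C = c1 TYPE('n)"
  have C: "C > 0" unfolding C_def by (rule c1_pos)
  have Jp: "real J > 0" using J by simp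
  have s1: "(\<Sum>i\<le>k. (cmod (c i) * (real J * C))^2/2) = real J * C^2 / 2"
  proof -
    have "(\<Sum>i\<le>k. (cmod (c i) * (real J * C))^2/2) = (real J * C)^2 / 2 * (\<Sum>i\<le>k. (cmod (c i))^2)"
      by (simp add: sum_distrib_left power_mult_distrib mult_ac)
    also have "\<dots> = real J * C^2 / 2" using Jp unfolding cs by (simp add: power2_eq_square)
    finally show ?thesis .
  qed
  have cs2: "(\<Sum>l\<le>k. cmod (c l))^2 \<le> (real k + 1) / real J"
    using sum_squared_le_sum_of_squares[of "\<lambda>l. cmod (c l)" "{..k}"] unfolding cs by (simp add: field_simps)
  have d2: "d^2 \<le> (real J * C / (2 * (real k + 1)))^2" using d0 dle unfolding C_def by (intro power_mono) auto
  have "(\<Sum>i\<le>k. (d * (\<Sum>l\<le>k. cmod (c l)))^2) = (real k + 1) * (d^2 * (\<Sum>l\<le>k. cmod (c l))^2)"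
    by (simp add: power_mult_distrib)
  also have "\<dots> \<le> (real k + 1) * ((real J * C / (2 * (real k + 1)))^2 * ((real k + 1) / real J))"
    using d2 cs2 by (intro mult_left_mono mult_mono) auto
  also have "\<dots> = real J * C^2 / 4"
  proof -
    define K where "K = real k + 1"
    have K: "K > 0" unfolding K_def by simp
    have "K * ((real J * C / (2 * K))^2 * (K / real J)) = real J * C^2 / 4 * ((K / K) * (K / K) * (real J / real J))"
      by (simp add: power2_eq_square)
    also have "\<dots> = real J * C^2 / 4" using K Jp by simp
    finally show ?thesis unfolding K_def .
  qed
  finally have s2: "(\<Sum>i\<le>k. (d * (\<Sum>l\<le>k. cmod (c l)))^2) \<le> real J * C^2 / 4" .
  show ?thesis unfolding C_def[symmetric] sum_subtractf s1 using s2 by simp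
qed




lemma big:
  fixes \<epsilon> a0 K0 :: real
  assumes eps: "\<epsilon> > 0" and a0: "a0 > 0"
  shows "\<exists>S::(real^'n::finite) set. S \<in> sets lebesgue \<and> bounded S \<and> emeasure lebesgue S = ennreal a0 \<and>
     ennreal K0 < sandwich_weak_norm (\<lambda>x. complex_of_real (\<epsilon> * indicator S x))"
proof -
  define C where "C = c1 TYPE('n)"
  have C: "C > 0" unfolding C_def by (rule c1_pos)
  define om' where "om' = om TYPE('n)"
  have om': "om' > 0" unfolding om'_def by (rule om_pos)
  define d where "d = CARD('n)"
  have d: "d > 0" unfolding d_def by simp
  obtain n :: nat where n: "4 * K0 / (\<epsilon> * a0 * C^2) < real n" using reals_Archimedean2 by blast
  define J where "J = max n 1"
  have J: "1 \<le> J" unfolding J_def by simp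
  have JK: "K0 < \<epsilon> * a0 * (real J * C^2 / 4)"
  proof -
    have pos: "\<epsilon> * a0 * C^2 > 0" using eps a0 C by simp
    have "4 * K0 / (\<epsilon> * a0 * C^2) < real J" using n unfolding J_def by linarith
    hence "4 * K0 < real J * (\<epsilon> * a0 * C^2)" using pos by (simp add: divide_less_eq)
    thus ?thesis by (simp add: field_simps)
  qed
  have vpos: "om' * (rho J / 4)^d > 0" using om' rho_pos[of J] by simp
  obtain k :: nat where k: "a0 / (om' * (rho J / 4)^d) < real k" using reals_Archimedean2 by blast
  have k': "a0 \<le> (real k + 1) * (om' * (rho J / 4)^d)"
    using k vpos by (simp add: divide_less_eq distrib_right)
  define r where "r = (a0 / ((real k + 1) * om')) powr (1 / real d)"
  have r0: "r > 0" unfolding r_def using a0 om' by simp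
  have rd: "r ^ d = a0 / ((real k + 1) * om')"
  proof -
    have "r ^ d = r powr (real d)" using r0 by (simp add: powr_realpow)
    also have "\<dots> = a0 / ((real k + 1) * om')" unfolding r_def using a0 om' d by (simp add: powr_powr)
    finally show ?thesis .
  qed
  have rJ: "r \<le> rho J / 4"
  proof (rule ccontr)
    assume "\<not> r \<le> rho J / 4"
    hence "(rho J / 4) ^ d < r ^ d" using rho_pos[of J] d by (intro power_strict_mono) auto
    moreover have "r ^ d \<le> (rho J / 4) ^ d" unfolding rd using k' om' by (simp add: divide_le_eq mult_ac)
    ultimately show False by simp
  qed
  have kvol: "(real k + 1) * (om' * r^d) = a0" unfolding rd using om' by simp
  define \<delta>0 where "\<delta>0 = real J * C / (2 * (real k + 1))"
  have d0: "\<delta>0 > 0" unfolding \<delta>0_def using J C by simp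
  define Bf where "Bf = \<delta>0 / (Phi1 TYPE('n) J + 1)"
  have Bf0: "Bf > 0" unfolding Bf_def using d0 Phi1_nonneg[where 'n='n, of J] by simp
  obtain R where R: "R > 0" "\<forall>z::real^'n. R \<le> norm z \<longrightarrow> GG z \<le> Bf"
    using G_decay[OF Bf0] by blast
  define Rs where "Rs = R + 2"
  have Rs: "2 \<le> Rs" unfolding Rs_def using R by simp
  have Bf1: "\<And>z::real^'n. Rs - 1 \<le> norm z \<Longrightarrow> GG z \<le> Bf" using R unfolding Rs_def by auto
  have BfPhi: "Bf * Phi1 TYPE('n) J \<le> \<delta>0"
  proof -
    have "Bf * Phi1 TYPE('n) J = \<delta>0 * (Phi1 TYPE('n) J / (Phi1 TYPE('n) J + 1))"
      unfolding Bf_def by simp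
    also have "\<dots> \<le> \<delta>0 * 1" using d0 Phi1_nonneg[where 'n='n, of J] by (intro mult_left_mono) auto
    finally show ?thesis by simp
  qed
  obtain B0 where B0: "\<forall>z::real^'n. rho J / 4 \<le> norm z \<longrightarrow> GG z \<le> B0"
    using G_bounded_away[of "rho J / 4"] rho_pos[of J] by auto
  define Bn where "Bn = max B0 0"
  have Bn1: "\<And>z::real^'n. rho J / 4 \<le> norm z \<Longrightarrow> GG z \<le> Bn" using B0 unfolding Bn_def by force
  have Bn2: "0 \<le> Bn" unfolding Bn_def by simp
  define e :: "real^'n" where "e = axis undefined 1"
  have e: "norm e = 1" unfolding e_def by simp
  define S where "S = Sset Rs e k r"
  have r2: "r \<le> 1/2" using rJ rho_half[OF J] rho_pos[of J] by linarith
  have Smeas: "emeasure lebesgue S = ennreal a0"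
  proof -
    have "emeasure lebesgue S = (\<Sum>i\<le>k. emeasure lebesgue (cball (pc Rs e i) r))"
      unfolding S_def Sset_def
      by (rule sum_emeasure[symmetric]) (auto simp: disjoint_family_on_def cball_disj[OF e Rs r2])
    also have "\<dots> = (\<Sum>i\<le>k. ennreal (om' * r^d))"
    proof (intro sum.cong refl)
      fix i
      show "emeasure lebesgue (cball (pc Rs e i) r) = ennreal (om' * r^d)"
        unfolding om'_def d_def by (rule emeasure_leb_cball) (use r0 in simp)
    qed
    also have "\<dots> = ennreal ((real k + 1) * (om' * r^d))"
      using om' r0 by (simp add: ennreal_of_nat_eq_real_of_nat ennreal_mult'' ennreal_times_divide add.commute)
    finally show ?thesis unfolding kvol .
  qed
  define lam where "lam = \<epsilon> * (om' * r^d) * (real J * C^2 / 4)"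
  have lam0: "0 \<le> lam" unfolding lam_def using eps om' r0 by simp
  have H: "\<exists>g\<in>l2. l2_norm g \<le> 1 \<and> (\<forall>i<k. l2_inner g (u i) = 0) \<and>
      lam \<le> cmod (sandwich_form (\<lambda>x. complex_of_real (\<epsilon> * indicator S x)) g g)"
    if uv: "\<forall>i<k. u i \<in> l2 \<and> v i \<in> l2" for u v :: "nat \<Rightarrow> 'n fn"
  proof -
    define a where "a i j = l2_inner (\<lambda>y. complex_of_real (phi J (pc Rs e i) y)) (u j)" for i j
    obtain c0 where c0: "\<exists>i\<in>{..k}. c0 i \<noteq> 0" "\<forall>j<k. (\<Sum>i\<in>{..k}. c0 i * a i j) = 0"
      using lin_solve[of "{..k}" k a] by auto
    define s where "s = (\<Sum>i\<le>k. (cmod (c0 i))^2)"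
    have s: "s > 0"
    proof -
      obtain i where i: "i \<le> k" "c0 i \<noteq> 0" using c0(1) by auto
      have "(cmod (c0 i))^2 \<le> s" unfolding s_def using i by (intro member_le_sum) auto
      moreover have "(cmod (c0 i))^2 > 0" using i by simp
      ultimately show ?thesis by linarith
    qed
    define q where "q = 1 / sqrt (real J * s)"
    have q: "q > 0" unfolding q_def using s J by simp
    define c where "c i = c0 i * complex_of_real q" for i
    have cs: "(\<Sum>i\<le>k. (cmod (c i))^2) = 1 / real J"
    proof -
      have "(\<Sum>i\<le>k. (cmod (c i))^2) = q^2 * s"
        unfolding c_def s_def using q by (simp add: norm_mult power_mult_distrib sum_distrib_left mult_ac)
      also have "q^2 = 1 / (real J * s)" unfolding q_def using s J by (simp add: power_divide)
      finally show ?thesis using s by simp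
    qed
    define g where "g = gfun J Rs e k c"
    have Rs1: "Rs > 1" using Rs by simp
    have gl2: "g \<in> l2" unfolding g_def by (rule gfun_l2(1)[OF e Rs1])
    have gn: "l2_norm g = 1"
      unfolding l2_norm_def g_def gfun_l2(2)[OF e Rs1] cs using J by simp
    have gi: "l2_inner g (u j) = 0" if j: "j < k" for j
    proof -
      have "l2_inner g (u j) = (\<Sum>i\<le>k. c i * a i j)"
        unfolding g_def a_def by (rule gfun_inner) (use uv j in auto)
      also have "\<dots> = complex_of_real q * (\<Sum>i\<le>k. c0 i * a i j)"
        unfolding c_def by (simp add: sum_distrib_left mult_ac)
      also have "\<dots> = 0" using c0(2) j by simp
      finally show ?thesis .
    qed
    have "\<epsilon> * (om' * r^d) * (\<Sum>i\<le>k. (cmod (c i) * (real J * C))^2/2 - (Bf * Phi1 TYPE('n) J * (\<Sum>l\<le>k. cmod (c l)))^2)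
        \<le> cmod (sandwich_form (\<lambda>x. complex_of_real (\<epsilon> * indicator S x)) g g)"
      unfolding S_def g_def om'_def d_def C_def
      by (rule form_lb[OF J e Rs r0 rJ eps Bn1 Bn2 Bf1 Bf0[THEN less_imp_le]])
    moreover have "real J * C^2 / 4 \<le> (\<Sum>i\<le>k. (cmod (c i) * (real J * C))^2/2 - (Bf * Phi1 TYPE('n) J * (\<Sum>l\<le>k. cmod (c l)))^2)"
      unfolding C_def
      by (rule LB_sum[OF J cs]) (use Bf0 Phi1_nonneg[where 'n='n, of J] BfPhi in \<open>auto simp: \<delta>0_def C_def\<close>)
    ultimately have "lam \<le> cmod (sandwich_form (\<lambda>x. complex_of_real (\<epsilon> * indicator S x)) g g)"
      unfolding lam_def using eps om' r0
      by (smt (verit, ccfv_SIG) mult_left_mono mult_pos_pos zero_less_power)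
    thus ?thesis using gl2 gn gi by (intro bexI[of _ g]) auto
  qed
  have W: "ennreal (real (k+1) * lam) \<le> sandwich_weak_norm (\<lambda>x. complex_of_real (\<epsilon> * indicator S x))"
    by (rule weak_lb[OF lam0]) (use H in blast)
  have eqk: "real (k+1) * lam = \<epsilon> * a0 * (real J * C^2 / 4)"
    unfolding lam_def kvol[symmetric] by (simp add: mult_ac)
  have ppos: "0 < \<epsilon> * a0 * (real J * C^2 / 4)" using eps a0 C J by simp
  have "ennreal K0 < ennreal (real (k+1) * lam)"
    unfolding eqk by (rule ennreal_lessI[OF ppos JK])
  also note W
  finally have "ennreal K0 < sandwich_weak_norm (\<lambda>x. complex_of_real (\<epsilon> * indicator S x))" .
  moreover have "S \<in> sets lebesgue" "bounded S" unfolding S_def by (auto intro: Sset_bounded)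
  ultimately show ?thesis using Smeas by blast
qed




lemma ind_level:
  fixes X :: "(real^'n::finite) set"
  assumes "\<epsilon> > 0"
  shows "{x. s < cmod (complex_of_real (\<epsilon> * indicator X x))} = (if s < 0 then UNIV else if s < \<epsilon> then X else {})"
  using assms by (auto simp: indicator_def)

lemma ind_S_space:
  fixes X :: "(real^'n::finite) set"
  assumes "\<epsilon> > 0" "X \<in> sets lebesgue" "emeasure lebesgue X < \<infinity>"
  shows "(\<lambda>x. complex_of_real (\<epsilon> * indicator X x)) \<in> S_space"
  unfolding S_space_def
proof (intro CollectI conjI exI[of _ "0::nat"])
  show "(\<lambda>x. complex_of_real (\<epsilon> * indicator X x)) \<in> borel_measurable lebesgue"
    using assms(2) by measurable
  have "{x. real 0 < cmod (complex_of_real (\<epsilon> * indicator X x))} = X"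
    using ind_level[OF assms(1), of 0 X] assms(1) by simp
  thus "emeasure lebesgue {x. real 0 < cmod (complex_of_real (\<epsilon> * indicator X x))} < \<infinity>"
    using assms(3) by simp
qed

theorem theorem1p2:
  fixes E :: "(real^'n::finite \<Rightarrow> complex) set" and N :: "('n fn) \<Rightarrow> real"
  assumes "sym_qBfs E N"
    and "\<exists>f\<in>E. \<not> (AE x in lebesgue. f x = 0)"
  shows "\<exists>f\<in>E. \<not> (sandwich_weak_norm f \<le> ennreal (N f))"
proof -
  have sub: "E \<subseteq> S_space"
    and latt: "\<forall>f\<in>E. \<forall>g\<in>S_space. (\<forall>x. cmod (g x) \<le> cmod (f x)) \<longrightarrow> g \<in> E \<and> N g \<le> N f"
    and symm: "\<forall>f\<in>E. \<forall>g\<in>S_space. (\<forall>t>0. rearr g t = rearr f t) \<longrightarrow> g \<in> E \<and> N g = N f"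
  proof -
    note d = assms(1)[unfolded sym_qBfs_def]
    show "E \<subseteq> S_space" using d by (rule conjunct1)
    show "\<forall>f\<in>E. \<forall>g\<in>S_space. (\<forall>x. cmod (g x) \<le> cmod (f x)) \<longrightarrow> g \<in> E \<and> N g \<le> N f"
      using d[THEN conjunct2, THEN conjunct2, THEN conjunct2, THEN conjunct2, THEN conjunct2,
              THEN conjunct2, THEN conjunct2, THEN conjunct2, THEN conjunct2] by (rule conjunct1)
    show "\<forall>f\<in>E. \<forall>g\<in>S_space. (\<forall>t>0. rearr g t = rearr f t) \<longrightarrow> g \<in> E \<and> N g = N f"
      using d[THEN conjunct2, THEN conjunct2, THEN conjunct2, THEN conjunct2, THEN conjunct2,
              THEN conjunct2, THEN conjunct2, THEN conjunct2, THEN conjunct2] by (rule conjunct2)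
  qed
  obtain f0 where f0: "f0 \<in> E" "\<not> (AE x in lebesgue. f0 x = 0)" using assms(2) by blast
  have f0m: "f0 \<in> borel_measurable lebesgue" using f0(1) sub unfolding S_space_def by auto
  define An where "An n = {x. inverse (real (Suc n)) \<le> cmod (f0 x)} \<inter> cball 0 (real n)" for n
  have An_sets: "An n \<in> sets lebesgue" for n
  proof -
    have "{x \<in> space lebesgue. inverse (real (Suc n)) \<le> cmod (f0 x)} \<in> sets lebesgue" using f0m by measurable
    hence "{x. inverse (real (Suc n)) \<le> cmod (f0 x)} \<in> sets lebesgue" by simp
    moreover have "cball (0::real^'n) (real n) \<in> sets lebesgue" by simp
    ultimately show ?thesis unfolding An_def by (rule sets.Int)
  qed
  have "\<exists>n. An n \<notin> null_sets lebesgue"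
  proof (rule ccontr)
    assume "\<not> (\<exists>n. An n \<notin> null_sets lebesgue)"
    hence "(\<Union>n. An n) \<in> null_sets lebesgue" by auto
    moreover have "{x \<in> space lebesgue. f0 x \<noteq> 0} \<subseteq> (\<Union>n. An n)"
    proof
      fix x assume "x \<in> {x \<in> space lebesgue. f0 x \<noteq> 0}"
      hence pos: "cmod (f0 x) > 0" by simp
      obtain n1 :: nat where n1: "inverse (cmod (f0 x)) < real n1" using reals_Archimedean2 by blast
      obtain n2 :: nat where n2: "norm x < real n2" using reals_Archimedean2 by blast
      define n where "n = max n1 n2"
      have "inverse (real (Suc n)) \<le> cmod (f0 x)"
      proof -
        have "inverse (cmod (f0 x)) \<le> real (Suc n)" using n1 unfolding n_def by linarith
        thus ?thesis using pos by (metis inverse_inverse_eq inverse_le_imp_le positive_imp_inverse_positive)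
      qed
      moreover have "x \<in> cball 0 (real n)" using n2 unfolding n_def by (simp add: dist_norm)
      ultimately show "x \<in> (\<Union>n. An n)" unfolding An_def by blast
    qed
    ultimately have "AE x in lebesgue. f0 x = 0" by (intro AE_I'[of "\<Union>n. An n"]) auto
    with f0(2) show False by simp
  qed
  then obtain n where n: "An n \<notin> null_sets lebesgue" by blast
  define A0 where "A0 = An n"
  define \<epsilon> where "\<epsilon> = inverse (real (Suc n))"
  have eps: "\<epsilon> > 0" unfolding \<epsilon>_def by simp
  have A0s: "A0 \<in> sets lebesgue" unfolding A0_def by (rule An_sets)
  have A0pos: "emeasure lebesgue A0 > 0" using n A0s unfolding A0_def by (simp add: null_sets_def zero_less_iff_neq_zero)
  have A0fin: "emeasure lebesgue A0 < \<infinity>"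
  proof -
    have "emeasure lebesgue A0 \<le> emeasure lebesgue (cball (0::real^'n) (real n))"
      unfolding A0_def An_def by (rule emeasure_mono) auto
    also have "\<dots> < \<infinity>" by (subst emeasure_leb_cball) auto
    finally show ?thesis .
  qed
  define a0 where "a0 = measure lebesgue A0"
  have A0a: "emeasure lebesgue A0 = ennreal a0" unfolding a0_def using A0fin by (simp add: emeasure_eq_ennreal_measure)
  have a0: "a0 > 0" using A0pos A0a by simp
  define h where "h = (\<lambda>x. complex_of_real (\<epsilon> * indicator A0 x))"
  have hS: "h \<in> S_space" unfolding h_def by (rule ind_S_space[OF eps A0s A0fin])
  have hle: "\<forall>x. cmod (h x) \<le> cmod (f0 x)"
  proof
    fix x
    have "x \<in> A0 \<Longrightarrow> \<epsilon> \<le> cmod (f0 x)" unfolding A0_def An_def \<epsilon>_def by auto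
    thus "cmod (h x) \<le> cmod (f0 x)"
      unfolding h_def using eps by (cases "x \<in> A0") auto
  qed
  have hE: "h \<in> E" using latt f0(1) hS hle by blast
  obtain S :: "(real^'n) set" where S: "S \<in> sets lebesgue" "bounded S" "emeasure lebesgue S = ennreal a0"
      "ennreal (N h) < sandwich_weak_norm (\<lambda>x. complex_of_real (\<epsilon> * indicator S x))"
    using big[OF eps a0, where 'n='n, of "N h"] by blast
  define fS where "fS = (\<lambda>x. complex_of_real (\<epsilon> * indicator S x))"
  have fS_S: "fS \<in> S_space" unfolding fS_def
    by (rule ind_S_space[OF eps S(1)]) (simp add: S(3))
  have lev: "emeasure lebesgue {x. s < cmod (fS x)} = emeasure lebesgue {x. s < cmod (h x)}" for s
    unfolding fS_def h_def ind_level[OF eps] using S(3) A0a by auto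
  have "\<forall>t>0. rearr fS t = rearr h t" unfolding rearr_def lev by simp
  hence fSE: "fS \<in> E" "N fS = N h" using symm hE fS_S by blast+
  have "\<not> (sandwich_weak_norm fS \<le> ennreal (N fS))"
    using S(4) unfolding fS_def[symmetric] fSE(2) by simp
  thus ?thesis using fSE(1) by blast
qed


end
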